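(* Let $\mathbf S$ be an SRRW in $\mathbb{R}^d$ with parameter $\alpha\in[0,1/2]$ and step distribution $\mu\ne\delta_{\mathbf 0}$ satisfying $\mathbb E\|\mathbf X_1\|^{2+\delta}<\infty$ for some $\delta>0$ and $\mathbb E\mathbf X_1=\mathbf 0$. Then for every $\nu\in(0,\delta/(4+2\delta))$, $$\lim_{n\to\infty}n^{\nu}\max\big\{|\Delta_n(\|\mathbf x\|^2)|,\ |\Delta_n(\|\mathbf x\|^{2+\delta/2})|,\ \|\Delta_n(\mathbf x\mathbf x^T)\|\big\}=0$$ almost surely and in $L^1(\mathbb P)$.
   Context: SRRW: $\mu$ a probability measure on $\mathbb{R}^d$, $\alpha\in[0,1]$; $(\xi_n)_{n\ge2}$ i.i.d. Bernoulli($\alpha$), $(U[n])_{n\ge1}$ independent with $U[n]$ uniform on $\{1,\dots,n\}$. Sample $\mathbf X_1\sim\mu$; for $n\ge1$, if $\xi_{n+1}=1$ set $\mathbf X_{n+1}=\mathbf X_{U[n]}$, else sample $\mathbf X_{n+1}\sim\mu$ independently. For a $\mu$-integrable function $g$, $\Delta_n(g):=\frac1n\sum_{i=1}^n g(\mathbf X_i)-\mathbb E g(\mathbf X_1)$; here $\Delta_n(\|\mathbf x\|^q)$ means $\Delta_n(g)$ for $g(\mathbf x)=\|\mathbf x\|^q$. $\Delta_n(\mathbf x\mathbf x^T)$ is the $d\times d$ matrix with entries $\Delta_n(x(i)x(j))$ ($x(i)$ the $i$-th coordinate), and $\|\Delta_n(\mathbf x\mathbf x^T)\|$ is its Frobenius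 norm. *)

theory Defs
  imports "HOL-Probability.Probability"
begin

text \<open>Index set for the driving randomness: innovations Y_n (n >= 1),
  coins xi_n (n >= 2), uniform indices U_n (n >= 1).\<close>

definition srrw_index :: "(nat + nat + nat) set" where
  "srrw_index = Inl ` {1..} \<union> Inr ` Inl ` {2..} \<union> Inr ` Inr ` {1..}"

definition srrw_gen ::
  "'a measure \<Rightarrow> (nat \<Rightarrow> 'a \<Rightarrow> real ^ 'd) \<Rightarrow> (nat \<Rightarrow> 'a \<Rightarrow> bool)
   \<Rightarrow> (nat \<Rightarrow> 'a \<Rightarrow> nat) \<Rightarrow> nat + nat + nat \<Rightarrow> 'a set set" where
  "srrw_gen M Y \<xi> U i = (case i of
      Inl n \<Rightarrow> {Y n -` A \<inter> space M | A. A \<in> sets borel}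
    | Inr (Inl n) \<Rightarrow> {\<xi> n -` A \<inter> space M | A. A \<in> sets (count_space UNIV)}
    | Inr (Inr n) \<Rightarrow> {U n -` A \<inter> space M | A. A \<in> sets (count_space UNIV)})"

definition srrw ::
  "'a measure \<Rightarrow> (real ^ 'd) measure \<Rightarrow> real \<Rightarrow> (nat \<Rightarrow> 'a \<Rightarrow> real ^ 'd)
   \<Rightarrow> (nat \<Rightarrow> 'a \<Rightarrow> bool) \<Rightarrow> (nat \<Rightarrow> 'a \<Rightarrow> nat) \<Rightarrow> (nat \<Rightarrow> 'a \<Rightarrow> real ^ 'd) \<Rightarrow> bool" where
  "srrw M \<mu> \<alpha> Y \<xi> U X \<longleftrightarrow>
     prob_space M \<and> prob_space \<mu> \<and> sets \<mu> = sets borel \<and> 0 \<le> \<alpha> \<and> \<alpha> \<le> 1 \<and>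
     (\<forall>n\<ge>1. Y n \<in> borel_measurable M \<and> distr M borel (Y n) = \<mu>) \<and>
     (\<forall>n\<ge>2. \<xi> n \<in> measurable M (count_space UNIV) \<and>
             distr M (count_space UNIV) (\<xi> n) = measure_pmf (bernoulli_pmf \<alpha>)) \<and>
     (\<forall>n\<ge>1. U n \<in> measurable M (count_space UNIV) \<and>
             distr M (count_space UNIV) (U n) = measure_pmf (pmf_of_set {1..n})) \<and>
     prob_space.indep_sets M (srrw_gen M Y \<xi> U) srrw_index \<and>
     (\<forall>\<omega>\<in>space M. X 1 \<omega> = Y 1 \<omega>) \<and>
     (\<forall>n\<ge>1. \<forall>\<omega>\<in>space M.
        X (Suc n) \<omega> = (if \<xi> (Suc n) \<omega> then X (U n \<omega>) \<omega> else Y (Suc n) \<omega>))"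

definition Delta ::
  "(real ^ 'd) measure \<Rightarrow> (nat \<Rightarrow> 'a \<Rightarrow> real ^ 'd) \<Rightarrow> (real ^ 'd \<Rightarrow> real) \<Rightarrow> nat \<Rightarrow> 'a \<Rightarrow> real" where
  "Delta \<mu> X g n \<omega> = (\<Sum>i=1..n. g (X i \<omega>)) / real n - (\<integral>x. g x \<partial>\<mu>)"

definition Delta_cov_frob ::
  "(real ^ 'd) measure \<Rightarrow> (nat \<Rightarrow> 'a \<Rightarrow> real ^ 'd) \<Rightarrow> nat \<Rightarrow> 'a \<Rightarrow> real" where
  "Delta_cov_frob \<mu> X n \<omega> =
     sqrt (\<Sum>i\<in>UNIV. \<Sum>j\<in>UNIV. (Delta \<mu> X (\<lambda>x. x $ i * x $ j) n \<omega>)\<^sup>2)"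

end

theory Submission
  imports Defs "HOL-Real_Asymp.Real_Asymp"
begin


function anc :: "(nat \<Rightarrow> 'a \<Rightarrow> bool) \<Rightarrow> (nat \<Rightarrow> 'a \<Rightarrow> nat) \<Rightarrow> nat \<Rightarrow> 'a \<Rightarrow> nat" where
  "anc xi UU 0 w = 0"
| "anc xi UU (Suc n) w = (if 1 \<le> n \<and> xi (Suc n) w \<and> 1 \<le> UU n w \<and> UU n w \<le> n
      then anc xi UU (UU n w) w else Suc n)"
  by pat_completeness auto
termination by (relation "Wellfounded.measure (\<lambda>(xi,UU,n,w). n)") auto

declare anc.simps[simp del]

lemma anc_0[simp]: "anc xi UU 0 w = 0" by (simp add: anc.simps)

lemma anc_Suc: "anc xi UU (Suc n) w = (if 1 \<le> n \<and> xi (Suc n) w \<and> 1 \<le> UU n w \<and> UU n w \<le> n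
      then anc xi UU (UU n w) w else Suc n)" by (simp add: anc.simps)

lemma anc_le: "anc xi UU i w \<le> i"
proof (induction i rule: less_induct)
  case (less i)
  show ?case
  proof (cases i)
    case (Suc n)
    then show ?thesis using less[of "UU n w"] by (auto simp: anc_Suc)
  qed simp
qed

lemma anc_ge1: "1 \<le> i \<Longrightarrow> 1 \<le> anc xi UU i w"
proof (induction i rule: less_induct)
  case (less i)
  show ?case
  proof (cases i)
    case (Suc n)
    then show ?thesis using less.IH[of "UU n w"] by (auto simp: anc_Suc)
  qed (use less in simp)
qed

lemma anc_1[simp]: "anc xi UU 1 w = 1"
  using anc_Suc[of xi UU 0 w] by simp

locale srrw_ctx =
  fixes M :: "'a measure" and mu :: "(real^'d) measure" and alpha :: real
    and Y X :: "nat \<Rightarrow> 'a \<Rightarrow> real^'d" and xi :: "nat \<Rightarrow> 'a \<Rightarrow> bool" and U :: "nat \<Rightarrow> 'a \<Rightarrow> nat"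
  assumes S: "srrw M mu alpha Y xi U X"
begin

lemma PS: "prob_space M" using S by (simp add: srrw_def)

sublocale prob_space M by (rule PS)

lemma mu_prob: "prob_space mu" and sets_mu: "sets mu = sets borel"
  and alpha_ge: "0 \<le> alpha" and alpha_le: "alpha \<le> 1"
  using S by (auto simp: srrw_def)

lemma Y_meas[measurable]: "1 \<le> n \<Longrightarrow> Y n \<in> borel_measurable M"
  and Y_distr: "1 \<le> n \<Longrightarrow> distr M borel (Y n) = mu"
  using S by (auto simp: srrw_def)

lemma xi_meas: "2 \<le> n \<Longrightarrow> xi n \<in> measurable M (count_space UNIV)"
  and xi_distr: "2 \<le> n \<Longrightarrow> distr M (count_space UNIV) (xi n) = measure_pmf (bernoulli_pmf alpha)"
  using S by (auto simp: srrw_def)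

lemma U_meas: "1 \<le> n \<Longrightarrow> U n \<in> measurable M (count_space UNIV)"
  and U_distr: "1 \<le> n \<Longrightarrow> distr M (count_space UNIV) (U n) = measure_pmf (pmf_of_set {1..n})"
  using S by (auto simp: srrw_def)

lemma indep_gen: "indep_sets (srrw_gen M Y xi U) srrw_index"
  using S by (auto simp: srrw_def)

lemma X_1: "\<omega> \<in> space M \<Longrightarrow> X 1 \<omega> = Y 1 \<omega>"
  and X_Suc: "1 \<le> n \<Longrightarrow> \<omega> \<in> space M \<Longrightarrow> X (Suc n) \<omega> = (if xi (Suc n) \<omega> then X (U n \<omega>) \<omega> else Y (Suc n) \<omega>)"
  using S by (auto simp: srrw_def)

definition gen where "gen = srrw_gen M Y xi U"

definition Sig where "Sig I = sigma_sets (space M) (\<Union>i\<in>I. gen i)"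

lemma gen_Pow: "gen i \<subseteq> Pow (space M)"
  by (auto simp: gen_def srrw_gen_def split: sum.splits)

lemma sa_Sig: "sigma_algebra (space M) (Sig I)"
  unfolding Sig_def by (rule sigma_algebra_sigma_sets) (use gen_Pow in blast)

lemma gen_events: "i \<in> srrw_index \<Longrightarrow> gen i \<subseteq> events"
  using indep_gen unfolding indep_sets_def gen_def by auto

lemma Sig_events: "I \<subseteq> srrw_index \<Longrightarrow> Sig I \<subseteq> events"
  unfolding Sig_def using gen_events
  by (intro sets.sigma_sets_subset) auto

lemma Sig_mono: "I \<subseteq> J \<Longrightarrow> Sig I \<subseteq> Sig J"
  unfolding Sig_def by (intro sigma_sets_mono') auto

lemma Sig_basic: "i \<in> I \<Longrightarrow> A \<in> gen i \<Longrightarrow> A \<in> Sig I"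
  unfolding Sig_def by (rule sigma_sets.Basic) auto

lemma in_index[simp]:
  "Inl j \<in> srrw_index \<longleftrightarrow> 1 \<le> j"
  "Inr (Inl j) \<in> srrw_index \<longleftrightarrow> 2 \<le> j"
  "Inr (Inr j) \<in> srrw_index \<longleftrightarrow> 1 \<le> j"
  by (auto simp: srrw_index_def)

lemma Int_stable_vimage: "Int_stable {f -` A \<inter> S | A. A \<in> sets N}"
proof (unfold Int_stable_def, safe)
  fix A B assume "A \<in> sets N" "B \<in> sets N"
  then show "\<exists>C. (f -` A \<inter> S) \<inter> (f -` B \<inter> S) = f -` C \<inter> S \<and> C \<in> sets N"
    by (intro exI[of _ "A \<inter> B"]) auto
qed

lemma Int_stable_vimage2: "Int_stable {uu. \<exists>A. uu = f -` A \<inter> S}"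
proof (unfold Int_stable_def, safe)
  fix A B
  show "\<exists>C. (f -` A \<inter> S) \<inter> (f -` B \<inter> S) = f -` C \<inter> S"
    by (intro exI[of _ "A \<inter> B"]) auto
qed

lemma Int_stable_gen: "Int_stable (gen i)"
proof (cases i)
  case (Inl n) then show ?thesis by (simp add: gen_def srrw_gen_def Int_stable_vimage)
next
  case (Inr k) then show ?thesis
    by (cases k) (simp_all add: gen_def srrw_gen_def Int_stable_vimage2)
qed

lemma indep_Sig:
  fixes I :: "'k \<Rightarrow> (nat + nat + nat) set"
  assumes "\<And>k. k \<in> K \<Longrightarrow> I k \<subseteq> srrw_index" "disjoint_family_on I K"
  shows "indep_sets (\<lambda>k. Sig (I k)) K"
  unfolding Sig_def
proof (rule indep_sets_collect_sigma)
  show "indep_sets gen (\<Union>k\<in>K. I k)"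
    unfolding gen_def by (rule indep_sets_mono_index[OF _ indep_gen]) (use assms(1) in auto)
qed (use assms Int_stable_gen in auto)

lemma xi_event: "Inr (Inl n) \<in> I \<Longrightarrow> {\<omega>\<in>space M. xi n \<omega>} \<in> Sig I"
  by (rule Sig_basic[of "Inr (Inl n)"]) (auto simp: gen_def srrw_gen_def intro!: exI[of _ "{True}"])

lemma U_event: "Inr (Inr n) \<in> I \<Longrightarrow> {\<omega>\<in>space M. U n \<omega> = u} \<in> Sig I"
  by (rule Sig_basic[of "Inr (Inr n)"]) (auto simp: gen_def srrw_gen_def intro!: exI[of _ "{u}"])

lemma Y_event: "Inl j \<in> I \<Longrightarrow> B \<in> sets borel \<Longrightarrow> Y j -` B \<inter> space M \<in> Sig I"
  by (rule Sig_basic[of "Inl j"]) (auto simp: gen_def srrw_gen_def)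

definition GI :: "nat \<Rightarrow> (nat + nat + nat) set" where
  "GI n = Inr ` Inl ` {2..n} \<union> Inr ` Inr ` {1..<n}"

definition GA :: "(nat + nat + nat) set" where
  "GA = Inr ` Inl ` {2..} \<union> Inr ` Inr ` {1..}"

lemma GI_mono: "m \<le> n \<Longrightarrow> GI m \<subseteq> GI n"
  unfolding GI_def by auto

lemma GI_GA: "GI n \<subseteq> GA" unfolding GI_def GA_def by auto
lemma GA_index: "GA \<subseteq> srrw_index" unfolding GA_def srrw_index_def by auto
lemma GI_index: "GI n \<subseteq> srrw_index" using GI_GA GA_index by blast

abbreviation a where "a i \<omega> \<equiv> anc xi U i \<omega>"

lemma anc_event_aux: "\<forall>u\<le>n. \<forall>j. {\<omega>\<in>space M. a u \<omega> = j} \<in> Sig (GI n)"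
proof (induction n)
  case 0
  interpret sa: sigma_algebra "space M" "Sig (GI 0)" by (rule sa_Sig)
  show ?case
  proof (intro allI impI)
    fix u j :: nat assume "u \<le> 0"
    then have "{\<omega>\<in>space M. a u \<omega> = j} = (if j = 0 then space M else {})" by auto
    then show "{\<omega>\<in>space M. a u \<omega> = j} \<in> Sig (GI 0)" by simp
  qed
next
  case (Suc n)
  interpret sa: sigma_algebra "space M" "Sig (GI (Suc n))" by (rule sa_Sig)
  have sub: "Sig (GI n) \<subseteq> Sig (GI (Suc n))" by (rule Sig_mono[OF GI_mono]) simp
  show ?case
  proof (intro allI impI)
    fix u j :: nat assume u: "u \<le> Suc n"
    show "{\<omega>\<in>space M. a u \<omega> = j} \<in> Sig (GI (Suc n))"
    proof (cases "u \<le> n")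
      case True then show ?thesis using Suc sub by blast
    next
      case False
      then have u: "u = Suc n" using u by simp
      show ?thesis
      proof (cases "n = 0")
        case True
        then have "{\<omega>\<in>space M. a u \<omega> = j} = (if j = 1 then space M else {})" using u by (auto simp: anc_Suc)
        then show ?thesis by simp
      next
        case False
        define C where "C = {\<omega>\<in>space M. xi (Suc n) \<omega>} \<inter> (\<Union>v\<in>{1..n}. {\<omega>\<in>space M. U n \<omega> = v})"
        have C: "C \<in> Sig (GI (Suc n))" unfolding C_def
          using False by (intro sa.Int sa.finite_UN xi_event U_event) (auto simp: GI_def)
        have ifs: "(if j = Suc n then space M else {}) \<in> Sig (GI (Suc n))"
          by (simp add: sa.top)
        have "{\<omega>\<in>space M. a u \<omega> = j} =
          ({\<omega>\<in>space M. xi (Suc n) \<omega>} \<inter> (\<Union>v\<in>{1..n}. {\<omega>\<in>space M. U n \<omega> = v} \<inter> {\<omega>\<in>space M. a v \<omega> = j}))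
          \<union> ((space M - C) \<inter> (if j = Suc n then space M else {}))"
          using False unfolding u C_def by (auto simp: anc_Suc)
        also have "\<dots> \<in> Sig (GI (Suc n))"
        proof -
          have e1: "{\<omega>\<in>space M. xi (Suc n) \<omega>} \<in> Sig (GI (Suc n))"
            using False by (intro xi_event) (auto simp: GI_def)
          have e2: "{\<omega>\<in>space M. U n \<omega> = v} \<in> Sig (GI (Suc n))" for v
            using False by (intro U_event) (auto simp: GI_def)
          have e3: "{\<omega>\<in>space M. a v \<omega> = j} \<in> Sig (GI (Suc n))" if "v \<in> {1..n}" for v
            using Suc sub that by auto
          show ?thesis
            by (intro sa.Un sa.Int sa.finite_UN ballI sa.Diff sa.top e1 e2 e3 C ifs finite_atLeastAtMost) 
        qed
        finally show ?thesis .
      qed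
    qed
  qed
qed

lemma anc_event: "i \<le> n \<Longrightarrow> {\<omega>\<in>space M. a i \<omega> = j} \<in> Sig (GI n)"
  using anc_event_aux[of n] by simp

lemma anc_eq_event: "i \<le> n \<Longrightarrow> i' \<le> n \<Longrightarrow> {\<omega>\<in>space M. a i \<omega> = a i' \<omega>} \<in> Sig (GI n)"
proof -
  assume i: "i \<le> n" "i' \<le> n"
  interpret sa: sigma_algebra "space M" "Sig (GI n)" by (rule sa_Sig)
  have "{\<omega>\<in>space M. a i \<omega> = a i' \<omega>} = (\<Union>j\<in>{0..n}. {\<omega>\<in>space M. a i \<omega> = j} \<inter> {\<omega>\<in>space M. a i' \<omega> = j})"
  proof -
    have "a i x \<le> n" "a i' x \<le> n" for x using i anc_le[of xi U i x] anc_le[of xi U i' x] by linarith+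
    then show ?thesis by auto
  qed
  also have "\<dots> \<in> Sig (GI n)" using i by (intro sa.finite_UN sa.Int anc_event) auto
  finally show ?thesis .
qed

lemma anc_meas: "a i \<in> measurable M (count_space UNIV)"
proof -
  have "{\<omega>\<in>space M. a i \<omega> = j} \<in> sets M" for j
    using anc_event[of i i j] Sig_events[OF GI_index] by blast
  then show ?thesis
    by (subst measurable_count_space_eq2_countable) (auto simp: vimage_def Int_def conj_commute)
qed

definition Xa where "Xa i \<omega> = Y (a i \<omega>) \<omega>"

lemma Xa_meas[measurable]: "1 \<le> i \<Longrightarrow> Xa i \<in> borel_measurable M"
proof -
  assume i: "1 \<le> i"
  have "(\<lambda>\<omega>. (\<lambda>j. if 1 \<le> j then Y j \<omega> else 0) (a i \<omega>)) \<in> borel_measurable M"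
  proof (rule measurable_compose_countable'[OF _ anc_meas])
    fix j show "(\<lambda>\<omega>. if 1 \<le> j then Y j \<omega> else 0) \<in> borel_measurable M" by (cases "1 \<le> j") auto
  qed auto
  moreover have "(\<lambda>\<omega>. (\<lambda>j. if 1 \<le> j then Y j \<omega> else 0) (a i \<omega>)) = Xa i"
    using anc_ge1[OF i, of xi U] by (simp add: Xa_def fun_eq_iff)
  ultimately show ?thesis by simp
qed

end

context srrw_ctx begin

lemma Sig_sub_space: "A \<in> Sig I \<Longrightarrow> A \<subseteq> space M"
  unfolding Sig_def using gen_Pow by (intro sigma_sets_into_sp[of _ "space M"]) auto

lemma Sig_sets: "I \<subseteq> srrw_index \<Longrightarrow> A \<in> Sig I \<Longrightarrow> A \<in> sets M"
  using Sig_events by blast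

lemma indicator_vimage_Sig:
  assumes A: "A \<in> Sig I"
  shows "(indicator A :: 'a \<Rightarrow> real) -` B \<inter> space M \<in> Sig I"
proof -
  interpret sa: sigma_algebra "space M" "Sig I" by (rule sa_Sig)
  have D: "space M - A \<in> Sig I" using A by (intro sa.Diff sa.top)
  have "(indicator A :: 'a \<Rightarrow> real) -` B \<inter> space M = (if (1::real) \<in> B then A else {}) \<union> (if (0::real) \<in> B then space M - A else {})"
    using Sig_sub_space[OF A] by (auto simp: indicator_def of_bool_def split: if_splits)
  also have "\<dots> \<in> Sig I" using A D by (auto intro!: sa.Un)
  finally show ?thesis .
qed

lemma fY_vimage:
  assumes "Inl j \<in> I" "f \<in> borel_measurable borel" "B \<in> sets borel"
  shows "(\<lambda>\<omega>. f (Y j \<omega>)) -` B \<inter> space M \<in> Sig I"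
proof -
  have "(\<lambda>\<omega>. f (Y j \<omega>)) -` B \<inter> space M = Y j -` (f -` B) \<inter> space M" by auto
  moreover have "f -` B \<in> sets borel" using measurable_sets[OF assms(2,3)] by simp
  ultimately show ?thesis using Y_event[OF assms(1)] by simp
qed

lemma indep_prod:
  fixes W :: "'k \<Rightarrow> 'a \<Rightarrow> real"
  assumes ind: "indep_sets F K" and fin: "finite K"
    and meas: "\<And>k. k \<in> K \<Longrightarrow> W k \<in> borel_measurable M"
    and int: "\<And>k. k \<in> K \<Longrightarrow> integrable M (W k)"
    and vim: "\<And>k B. k \<in> K \<Longrightarrow> B \<in> sets borel \<Longrightarrow> W k -` B \<inter> space M \<in> F k"
  shows "(\<integral>\<omega>. (\<Prod>k\<in>K. W k \<omega>) \<partial>M) = (\<Prod>k\<in>K. \<integral>\<omega>. W k \<omega> \<partial>M)"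
proof -
  have "indep_vars (\<lambda>_. borel) W K"
    unfolding indep_vars_def2
  proof (intro conjI ballI)
    show "indep_sets (\<lambda>i. {W i -` A \<inter> space M |A. A \<in> sets borel}) K"
      by (rule indep_sets_mono_sets[OF ind]) (use vim in auto)
  qed (use meas in auto)
  then show ?thesis by (intro indep_vars_lebesgue_integral fin int)
qed

lemma bounded_integrable:
  fixes g :: "'a \<Rightarrow> real"
  assumes "g \<in> borel_measurable M" "\<And>\<omega>. \<omega> \<in> space M \<Longrightarrow> \<bar>g \<omega>\<bar> \<le> B"
  shows "integrable M g"
  using assms by (intro integrable_const_bound[where B=B]) auto

lemma int_fY:
  fixes \<phi> :: "real^'d \<Rightarrow> real"
  assumes "1 \<le> j" "\<phi> \<in> borel_measurable borel"
  shows "(\<integral>\<omega>. \<phi> (Y j \<omega>) \<partial>M) = (\<integral>x. \<phi> x \<partial>mu)"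
  using integral_distr[OF Y_meas[OF assms(1)] assms(2)] Y_distr[OF assms(1)] by simp

lemma disj_GA: "GA \<inter> {Inl j} = {}" unfolding GA_def by auto

lemma ind_integrable: "A \<in> sets M \<Longrightarrow> integrable M (indicator A :: 'a \<Rightarrow> real)"
  by (rule bounded_integrable[where B=1]) (auto simp: indicator_def)

lemma indep2:
  fixes \<phi> :: "real^'d \<Rightarrow> real"
  assumes A: "A \<in> Sig GA" and j: "1 \<le> j" and \<phi>: "\<phi> \<in> borel_measurable borel" "\<And>x. \<bar>\<phi> x\<bar> \<le> B"
  shows "(\<integral>\<omega>. indicator A \<omega> * \<phi> (Y j \<omega>) \<partial>M) = prob A * (\<integral>x. \<phi> x \<partial>mu)"
proof -
  define I where "I = (\<lambda>k::nat. if k = 0 then GA else {Inl j})"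
  define W where "W = (\<lambda>k::nat. if k = 0 then indicator A else (\<lambda>\<omega>. \<phi> (Y j \<omega>)))"
  have ind: "indep_sets (\<lambda>k. Sig (I k)) {0,1}"
    using GA_index j disj_GA by (intro indep_Sig) (auto simp: I_def disjoint_family_on_def)
  have Asets: "A \<in> sets M" using Sig_sets[OF GA_index A] .
  have "(\<integral>\<omega>. (\<Prod>k\<in>{0,1}. W k \<omega>) \<partial>M) = (\<Prod>k\<in>{0,1}. \<integral>\<omega>. W k \<omega> \<partial>M)"
  proof (rule indep_prod[OF ind])
    fix k :: nat assume k: "k \<in> {0,1}"
    show "W k \<in> borel_measurable M" using k Asets j \<phi> by (auto simp: W_def)
    show "integrable M (W k)"
    proof (cases "k = 0")
      case True then show ?thesis using Asets by (simp add: W_def ind_integrable)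
    next
      case False then show ?thesis using j \<phi> by (intro bounded_integrable[where B=B]) (auto simp: W_def)
    qed
    fix B' :: "real set" assume "B' \<in> sets borel"
    then show "W k -` B' \<inter> space M \<in> Sig (I k)"
      using k A \<phi> by (auto simp: W_def I_def intro: indicator_vimage_Sig fY_vimage)
  qed simp
  then show ?thesis using Asets by (simp add: W_def int_fY[OF j \<phi>(1)])
qed

lemma indep3:
  fixes \<phi> \<psi> :: "real^'d \<Rightarrow> real"
  assumes A: "A \<in> Sig GA" and j: "1 \<le> j" and k: "1 \<le> k" and jk: "j \<noteq> k"
    and \<phi>: "\<phi> \<in> borel_measurable borel" "\<And>x. \<bar>\<phi> x\<bar> \<le> B"
    and \<psi>: "\<psi> \<in> borel_measurable borel" "\<And>x. \<bar>\<psi> x\<bar> \<le> B"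
  shows "(\<integral>\<omega>. indicator A \<omega> * (\<phi> (Y j \<omega>) * \<psi> (Y k \<omega>)) \<partial>M) = prob A * (\<integral>x. \<phi> x \<partial>mu) * (\<integral>x. \<psi> x \<partial>mu)"
proof -
  define I where "I = (\<lambda>m::nat. if m = 0 then GA else if m = 1 then {Inl j} else {Inl k})"
  define W where "W = (\<lambda>m::nat. if m = 0 then indicator A else if m = 1 then (\<lambda>\<omega>. \<phi> (Y j \<omega>)) else (\<lambda>\<omega>. \<psi> (Y k \<omega>)))"
  have ind: "indep_sets (\<lambda>m. Sig (I m)) {0,1,2}"
    using GA_index j k jk disj_GA by (intro indep_Sig) (auto simp: I_def disjoint_family_on_def GA_def)
  have Asets: "A \<in> sets M" using Sig_sets[OF GA_index A] .
  have "(\<integral>\<omega>. (\<Prod>m\<in>{0,1,2}. W m \<omega>) \<partial>M) = (\<Prod>m\<in>{0,1,2}. \<integral>\<omega>. W m \<omega> \<partial>M)"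
  proof (rule indep_prod[OF ind])
    fix m :: nat assume m: "m \<in> {0,1,2}"
    show "W m \<in> borel_measurable M" using m Asets j k \<phi> \<psi> by (auto simp: W_def)
    show "integrable M (W m)"
    proof (cases "m = 0")
      case True then show ?thesis using Asets by (simp add: W_def ind_integrable)
    next
      case False
      show ?thesis
      proof (cases "m = 1")
        case True then show ?thesis using j \<phi> by (intro bounded_integrable[where B=B]) (auto simp: W_def)
      next
        case F2: False then show ?thesis using False k \<psi> by (intro bounded_integrable[where B=B]) (auto simp: W_def)
      qed
    qed
    fix B' :: "real set" assume "B' \<in> sets borel"
    then show "W m -` B' \<inter> space M \<in> Sig (I m)"
      using m A \<phi> \<psi> by (auto simp: W_def I_def intro: indicator_vimage_Sig fY_vimage)
  qed simp
  then show ?thesis using Asets by (simp add: W_def int_fY[OF j \<phi>(1)] int_fY[OF k \<psi>(1)] mult.assoc)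
qed

lemma prob_xi: "1 \<le> n \<Longrightarrow> prob {\<omega>\<in>space M. xi (Suc n) \<omega>} = alpha"
proof -
  assume n: "1 \<le> n"
  have "prob {\<omega>\<in>space M. xi (Suc n) \<omega>} = measure (distr M (count_space UNIV) (xi (Suc n))) {True}"
    using n by (subst measure_distr[OF xi_meas]) (auto simp: vimage_def Int_def conj_commute)
  also have "\<dots> = alpha" using n alpha_ge alpha_le by (simp add: xi_distr measure_pmf_single)
  finally show ?thesis .
qed

lemma prob_U: "1 \<le> n \<Longrightarrow> prob {\<omega>\<in>space M. U n \<omega> = u} = (if u \<in> {1..n} then 1 / real n else 0)"
proof -
  assume n: "1 \<le> n"
  have "prob {\<omega>\<in>space M. U n \<omega> = u} = measure (distr M (count_space UNIV) (U n)) {u}"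
    using n by (subst measure_distr[OF U_meas]) (auto simp: vimage_def Int_def conj_commute)
  also have "\<dots> = (if u \<in> {1..n} then 1 / real n else 0)" using n
    by (simp add: U_distr measure_pmf_single pmf_of_set indicator_def)
  finally show ?thesis .
qed

lemma rec_event:
  assumes n: "1 \<le> n" and A: "A \<in> Sig (GI n)"
  shows "prob ({\<omega>\<in>space M. xi (Suc n) \<omega>} \<inter> {\<omega>\<in>space M. U n \<omega> = u} \<inter> A)
     = alpha * (if u \<in> {1..n} then 1 / real n else 0) * prob A"
proof -
  define I where "I = (\<lambda>m::nat. if m = 0 then GI n else if m = 1 then {Inr (Inl (Suc n))} else {Inr (Inr n)})"
  define E where "E = (\<lambda>m::nat. if m = 0 then A else if m = 1 then {\<omega>\<in>space M. xi (Suc n) \<omega>} else {\<omega>\<in>space M. U n \<omega> = u})"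
  have ind: "indep_sets (\<lambda>m. Sig (I m)) {0,1,2}"
    using GI_index n by (intro indep_Sig) (auto simp: I_def disjoint_family_on_def GI_def)
  have "prob (\<Inter>m\<in>{0,1,2}. E m) = (\<Prod>m\<in>{0,1,2}. prob (E m))"
    by (rule indep_setsD[OF ind]) (use A n in \<open>auto simp: E_def I_def intro: xi_event U_event\<close>)
  moreover have "(\<Inter>m\<in>{0,1,2}. E m) = {\<omega>\<in>space M. xi (Suc n) \<omega>} \<inter> {\<omega>\<in>space M. U n \<omega> = u} \<inter> A"
    by (auto simp: E_def)
  ultimately show ?thesis using n by (simp add: E_def prob_xi prob_U)
qed

definition pc where "pc i i' = prob {\<omega>\<in>space M. a i \<omega> = a i' \<omega>}"

definition ccab where "ccab lo hi = (\<Sum>i\<in>{lo<..hi}. \<Sum>i'\<in>{lo<..hi}. pc i i')"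

lemma pc_sym: "pc i i' = pc i' i" unfolding pc_def by (simp add: eq_commute)
lemma pc_self: "pc i i = 1" unfolding pc_def by (simp add: prob_space)
lemma pc_nonneg: "0 \<le> pc i i'" unfolding pc_def by simp

lemma anc_event_sets: "{\<omega>\<in>space M. a i \<omega> = j} \<in> sets M"
  using anc_event[of i i j] Sig_sets[OF GI_index] by blast

lemma anc_event_GA: "{\<omega>\<in>space M. a i \<omega> = j} \<in> Sig GA"
  using anc_event[of i i j] Sig_mono[OF GI_GA] by blast

end

context srrw_ctx begin

lemma space_mu: "space mu = UNIV"
  using sets_eq_imp_space_eq[OF sets_mu] by simp

lemma ind_anc_pt: "\<omega> \<in> space M \<Longrightarrow> indicator {\<omega>\<in>space M. a i \<omega> = j} \<omega> = (if a i \<omega> = j then 1 else (0::real))"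
  by (simp add: indicator_def)

lemma sum_anc_one:
  assumes "1 \<le> i"
  shows "(\<Sum>j\<in>{1..i}. prob {\<omega>\<in>space M. a i \<omega> = j}) = 1"
proof -
  have "(\<Sum>j\<in>{1..i}. prob {\<omega>\<in>space M. a i \<omega> = j}) = (\<Sum>j\<in>{1..i}. \<integral>\<omega>. indicator {\<omega>\<in>space M. a i \<omega> = j} \<omega> \<partial>M)"
    using anc_event_sets by (simp add: Int_absorb2)
  also have "\<dots> = (\<integral>\<omega>. (\<Sum>j\<in>{1..i}. indicator {\<omega>\<in>space M. a i \<omega> = j} \<omega>) \<partial>M)"
    by (rule Bochner_Integration.integral_sum[symmetric]) (simp add: ind_integrable anc_event_sets)
  also have "\<dots> = (\<integral>\<omega>. 1 \<partial>M)"
  proof (rule Bochner_Integration.integral_cong[OF refl])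
    fix \<omega> assume w: "\<omega> \<in> space M"
    have "a i \<omega> \<in> {1..i}" using anc_ge1[OF assms] anc_le by auto
    then show "(\<Sum>j\<in>{1..i}. indicator {\<omega>\<in>space M. a i \<omega> = j} \<omega>) = (1::real)"
      using w by (simp add: ind_anc_pt)
  qed
  finally show ?thesis by (simp add: prob_space)
qed

lemma Xa_distr: assumes i: "1 \<le> i" shows "distr M borel (Xa i) = mu"
proof (rule measure_eqI)
  show "sets (distr M borel (Xa i)) = sets mu" using sets_mu by simp
  fix B assume "B \<in> sets (distr M borel (Xa i))"
  then have B: "B \<in> sets borel" by simp
  have "prob (Xa i -` B \<inter> space M) = (\<integral>\<omega>. indicator (Xa i -` B \<inter> space M) \<omega> \<partial>M)"
    by simp
  also have "\<dots> = (\<integral>\<omega>. (\<Sum>j\<in>{1..i}. indicator {\<omega>\<in>space M. a i \<omega> = j} \<omega> * indicator B (Y j \<omega>)) \<partial>M)"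
  proof (rule Bochner_Integration.integral_cong[OF refl])
    fix \<omega> assume w: "\<omega> \<in> space M"
    have "a i \<omega> \<in> {1..i}" using anc_ge1[OF i] anc_le by auto
    then show "indicator (Xa i -` B \<inter> space M) \<omega> = (\<Sum>j\<in>{1..i}. indicator {\<omega>\<in>space M. a i \<omega> = j} \<omega> * (indicator B (Y j \<omega>) :: real))"
      using w by (simp add: ind_anc_pt Xa_def indicator_def)
  qed
  also have "\<dots> = (\<Sum>j\<in>{1..i}. \<integral>\<omega>. indicator {\<omega>\<in>space M. a i \<omega> = j} \<omega> * indicator B (Y j \<omega>) \<partial>M)"
  proof (rule Bochner_Integration.integral_sum)
    fix j assume j: "j \<in> {1..i}"
    show "integrable M (\<lambda>\<omega>. indicator {\<omega>\<in>space M. a i \<omega> = j} \<omega> * indicator B (Y j \<omega>) :: real)"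
    proof (rule bounded_integrable[where B=1])
      show "(\<lambda>\<omega>. indicator {\<omega>\<in>space M. a i \<omega> = j} \<omega> * indicator B (Y j \<omega>) :: real) \<in> borel_measurable M"
        using j by (intro borel_measurable_times borel_measurable_indicator anc_event_sets
            measurable_compose[OF Y_meas borel_measurable_indicator] B) auto
    qed (auto simp: indicator_def)
  qed
  also have "\<dots> = (\<Sum>j\<in>{1..i}. prob {\<omega>\<in>space M. a i \<omega> = j} * measure mu B)"
  proof (rule sum.cong[OF refl])
    fix j assume j: "j \<in> {1..i}"
    have "(\<integral>\<omega>. indicator {\<omega>\<in>space M. a i \<omega> = j} \<omega> * indicator B (Y j \<omega>) \<partial>M)
        = prob {\<omega>\<in>space M. a i \<omega> = j} * (\<integral>x. indicator B x \<partial>mu)"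
      using j B by (intro indep2[where B=1] anc_event_GA) (auto simp: indicator_def)
    also have "(\<integral>x. indicator B x \<partial>mu) = measure mu B" using space_mu by simp
    finally show "(\<integral>\<omega>. indicator {\<omega>\<in>space M. a i \<omega> = j} \<omega> * indicator B (Y j \<omega>) \<partial>M) = prob {\<omega>\<in>space M. a i \<omega> = j} * measure mu B" .
  qed
  also have "\<dots> = measure mu B" using sum_anc_one[OF i] by (simp add: sum_distrib_right[symmetric])
  finally have eq: "prob (Xa i -` B \<inter> space M) = measure mu B" .
  have "emeasure (distr M borel (Xa i)) B = emeasure M (Xa i -` B \<inter> space M)"
    using B i by (simp add: emeasure_distr)
  also have "\<dots> = ennreal (measure mu B)" using eq B i
    by (simp add: emeasure_eq_measure)
  also have "\<dots> = emeasure mu B"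
  proof -
    interpret mu: prob_space mu by (rule mu_prob)
    show ?thesis by (simp add: mu.emeasure_eq_measure)
  qed
  finally show "emeasure (distr M borel (Xa i)) B = emeasure mu B" .
qed

lemma int_sum:
  fixes G :: "'j \<Rightarrow> 'a \<Rightarrow> real"
  shows "(\<And>j. j \<in> S \<Longrightarrow> integrable M (G j)) \<Longrightarrow> (\<integral>\<omega>. (\<Sum>j\<in>S. G j \<omega>) \<partial>M) = (\<Sum>j\<in>S. \<integral>\<omega>. G j \<omega> \<partial>M)"
  by (rule Bochner_Integration.integral_sum)

lemma pair:
  fixes f :: "real^'d \<Rightarrow> real"
  assumes i: "1 \<le> i" and i': "1 \<le> i'" and f: "f \<in> borel_measurable borel" "\<And>x. \<bar>f x\<bar> \<le> B"
    and f0: "(\<integral>x. f x \<partial>mu) = 0"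
  shows "(\<integral>\<omega>. f (Xa i \<omega>) * f (Xa i' \<omega>) \<partial>M) = (\<integral>x. (f x)^2 \<partial>mu) * pc i i'"
proof -
  define E where "E j k = {\<omega>\<in>space M. a i \<omega> = j} \<inter> {\<omega>\<in>space M. a i' \<omega> = k}" for j k
  have E_GA: "E j k \<in> Sig GA" for j k
  proof -
    interpret sa: sigma_algebra "space M" "Sig GA" by (rule sa_Sig)
    show ?thesis unfolding E_def by (intro sa.Int anc_event_GA)
  qed
  have E_sets: "E j k \<in> sets M" for j k using Sig_sets[OF GA_index E_GA] .
  have B0: "0 \<le> B" using f(2)[of 0] by simp
  have f2: "\<bar>(f x)^2\<bar> \<le> B^2" for x
  proof -
    have "\<bar>f x\<bar>^2 \<le> B^2" using f(2)[of x] by (intro power_mono) auto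
    then show ?thesis by (simp add: power2_abs)
  qed
  have ai: "a i \<omega> \<in> {1..i}" "a i' \<omega> \<in> {1..i'}" for \<omega> using anc_ge1[OF i] anc_ge1[OF i'] anc_le by auto
  have "(\<integral>\<omega>. f (Xa i \<omega>) * f (Xa i' \<omega>) \<partial>M)
      = (\<integral>\<omega>. (\<Sum>j\<in>{1..i}. \<Sum>k\<in>{1..i'}. indicator (E j k) \<omega> * (f (Y j \<omega>) * f (Y k \<omega>))) \<partial>M)"
  proof (rule Bochner_Integration.integral_cong[OF refl])
    fix \<omega> assume w: "\<omega> \<in> space M"
    have ind: "indicator (E j k) \<omega> * x = (if k = a i' \<omega> then (if j = a i \<omega> then x else 0) else 0)" for j k and x :: real
      using w by (auto simp: E_def indicator_def)
    show "f (Xa i \<omega>) * f (Xa i' \<omega>) = (\<Sum>j\<in>{1..i}. \<Sum>k\<in>{1..i'}. indicator (E j k) \<omega> * (f (Y j \<omega>) * f (Y k \<omega>)))"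
      using ai[of \<omega>] by (simp only: ind sum.delta) (simp add: Xa_def)
  qed
  also have "\<dots> = (\<Sum>j\<in>{1..i}. \<Sum>k\<in>{1..i'}. \<integral>\<omega>. indicator (E j k) \<omega> * (f (Y j \<omega>) * f (Y k \<omega>)) \<partial>M)"
  proof -
    have int: "integrable M (\<lambda>\<omega>. indicator (E j k) \<omega> * (f (Y j \<omega>) * f (Y k \<omega>)))" if "j \<in> {1..i}" "k \<in> {1..i'}" for j k
    proof (rule bounded_integrable[where B="B*B"])
      show "(\<lambda>\<omega>. indicator (E j k) \<omega> * (f (Y j \<omega>) * f (Y k \<omega>))) \<in> borel_measurable M"
        using that f E_sets by auto
      fix \<omega> show "\<bar>indicator (E j k) \<omega> * (f (Y j \<omega>) * f (Y k \<omega>))\<bar> \<le> B * B"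
        using f(2)[of "Y j \<omega>"] f(2)[of "Y k \<omega>"] B0
        by (auto simp: indicator_def abs_mult intro: mult_mono)
    qed
    have "(\<integral>\<omega>. (\<Sum>j\<in>{1..i}. \<Sum>k\<in>{1..i'}. indicator (E j k) \<omega> * (f (Y j \<omega>) * f (Y k \<omega>))) \<partial>M)
       = (\<Sum>j\<in>{1..i}. \<integral>\<omega>. (\<Sum>k\<in>{1..i'}. indicator (E j k) \<omega> * (f (Y j \<omega>) * f (Y k \<omega>))) \<partial>M)"
      using int by (intro int_sum[of "{1..i}" "\<lambda>j \<omega>. \<Sum>k\<in>{1..i'}. indicator (E j k) \<omega> * (f (Y j \<omega>) * f (Y k \<omega>))"])
        (rule Bochner_Integration.integrable_sum, rule int, assumption+)
    also have "\<dots> = (\<Sum>j\<in>{1..i}. \<Sum>k\<in>{1..i'}. \<integral>\<omega>. indicator (E j k) \<omega> * (f (Y j \<omega>) * f (Y k \<omega>)) \<partial>M)"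
      using int by (intro sum.cong refl int_sum) auto
    finally show ?thesis .
  qed
  also have "\<dots> = (\<Sum>j\<in>{1..i}. \<Sum>k\<in>{1..i'}. if j = k then prob (E j j) * (\<integral>x. (f x)^2 \<partial>mu) else 0)"
  proof (intro sum.cong refl)
    fix j k assume j: "j \<in> {1..i}" and k: "k \<in> {1..i'}"
    show "(\<integral>\<omega>. indicator (E j k) \<omega> * (f (Y j \<omega>) * f (Y k \<omega>)) \<partial>M) = (if j = k then prob (E j j) * (\<integral>x. (f x)^2 \<partial>mu) else 0)"
    proof (cases "j = k")
      case True
      have "(\<integral>\<omega>. indicator (E j j) \<omega> * (f (Y j \<omega>) * f (Y j \<omega>)) \<partial>M) = (\<integral>\<omega>. indicator (E j j) \<omega> * (\<lambda>x. (f x)^2) (Y j \<omega>) \<partial>M)"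
        by (simp add: power2_eq_square)
      also have "\<dots> = prob (E j j) * (\<integral>x. (f x)^2 \<partial>mu)"
        using j f f2 by (intro indep2[OF E_GA, where B="B^2"]) auto
      finally show ?thesis using True by simp
    next
      case False
      have "(\<integral>\<omega>. indicator (E j k) \<omega> * (f (Y j \<omega>) * f (Y k \<omega>)) \<partial>M) = prob (E j k) * (\<integral>x. f x \<partial>mu) * (\<integral>x. f x \<partial>mu)"
        using j k False f by (intro indep3[OF E_GA, where B=B]) auto
      then show ?thesis using False f0 by simp
    qed
  qed
  also have "\<dots> = (\<integral>x. (f x)^2 \<partial>mu) * (\<Sum>j\<in>{1..i}. if j \<in> {1..i'} then prob (E j j) else 0)"
    by (simp add: sum.delta sum_distrib_left if_distrib mult.commute cong: if_cong)
  also have "(\<Sum>j\<in>{1..i}. if j \<in> {1..i'} then prob (E j j) else 0) = pc i i'"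
  proof -
    have "(\<Sum>j\<in>{1..i}. if j \<in> {1..i'} then prob (E j j) else 0) = (\<Sum>j\<in>{1..i}. \<integral>\<omega>. (if j \<in> {1..i'} then indicator (E j j) \<omega> else 0) \<partial>M)"
      using E_sets by (intro sum.cong refl) (simp add: Int_absorb2)
    also have "\<dots> = (\<integral>\<omega>. (\<Sum>j\<in>{1..i}. if j \<in> {1..i'} then indicator (E j j) \<omega> else 0) \<partial>M)"
    proof (rule Bochner_Integration.integral_sum[symmetric])
      fix j show "integrable M (\<lambda>\<omega>. if j \<in> {1..i'} then indicator (E j j) \<omega> else 0 :: real)"
      proof (cases "j \<in> {1..i'}")
        case True then show ?thesis by (simp add: ind_integrable E_sets)
      next
        case False
        then have "(\<lambda>\<omega>. if j \<in> {1..i'} then indicator (E j j) \<omega> else 0 :: real) = (\<lambda>\<omega>. 0)" by (auto simp: fun_eq_iff)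
        then show ?thesis by simp
      qed
    qed
    also have "\<dots> = (\<integral>\<omega>. indicator {\<omega>\<in>space M. a i \<omega> = a i' \<omega>} \<omega> \<partial>M)"
    proof (rule Bochner_Integration.integral_cong[OF refl])
      fix \<omega> assume w: "\<omega> \<in> space M"
      have ind2: "(if j \<in> {1..i'} then indicator (E j j) \<omega> else 0) = (if j = a i \<omega> then (if a i \<omega> = a i' \<omega> then 1 else 0) else (0::real))" for j
        using w ai[of \<omega>] by (auto simp: E_def indicator_def)
      show "(\<Sum>j\<in>{1..i}. if j \<in> {1..i'} then indicator (E j j) \<omega> else 0) = (indicator {\<omega>\<in>space M. a i \<omega> = a i' \<omega>} \<omega> :: real)"
        by (simp only: ind2 sum.delta) (use ai[of \<omega>] w in \<open>simp add: indicator_def\<close>)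
    qed
    also have "\<dots> = pc i i'" unfolding pc_def
      using anc_eq_event[of i "max i i'" i'] Sig_sets[OF GI_index] by (simp add: Int_absorb2)
    finally show ?thesis .
  qed
  finally show ?thesis .
qed

end

context srrw_ctx begin

lemma second_moment:
  fixes f :: "real^'d \<Rightarrow> real"
  assumes f: "f \<in> borel_measurable borel" "\<And>x. \<bar>f x\<bar> \<le> B" and f0: "(\<integral>x. f x \<partial>mu) = 0"
  shows "(\<integral>\<omega>. (\<Sum>i\<in>{lo<..hi}. f (Xa i \<omega>))^2 \<partial>M) = (\<integral>x. (f x)^2 \<partial>mu) * ccab lo hi"
proof -
  have B0: "0 \<le> B" using f(2)[of 0] by simp
  have int: "integrable M (\<lambda>\<omega>. f (Xa i \<omega>) * f (Xa i' \<omega>))" if "i \<in> {lo<..hi}" "i' \<in> {lo<..hi}" for i i'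
  proof (rule bounded_integrable[where B="B*B"])
    show "(\<lambda>\<omega>. f (Xa i \<omega>) * f (Xa i' \<omega>)) \<in> borel_measurable M"
      using that f by (intro borel_measurable_times measurable_compose[OF Xa_meas f(1)]) auto
    fix \<omega> show "\<bar>f (Xa i \<omega>) * f (Xa i' \<omega>)\<bar> \<le> B * B"
      using f(2)[of "Xa i \<omega>"] f(2)[of "Xa i' \<omega>"] B0 by (auto simp: abs_mult intro: mult_mono)
  qed
  have "(\<integral>\<omega>. (\<Sum>i\<in>{lo<..hi}. f (Xa i \<omega>))^2 \<partial>M)
      = (\<integral>\<omega>. (\<Sum>i\<in>{lo<..hi}. \<Sum>i'\<in>{lo<..hi}. f (Xa i \<omega>) * f (Xa i' \<omega>)) \<partial>M)"
    by (simp add: power2_eq_square sum_product)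
  also have "\<dots> = (\<Sum>i\<in>{lo<..hi}. \<integral>\<omega>. (\<Sum>i'\<in>{lo<..hi}. f (Xa i \<omega>) * f (Xa i' \<omega>)) \<partial>M)"
    using int by (intro int_sum[of "{lo<..hi}" "\<lambda>i \<omega>. \<Sum>i'\<in>{lo<..hi}. f (Xa i \<omega>) * f (Xa i' \<omega>)"])
        (rule Bochner_Integration.integrable_sum, rule int, assumption+)
  also have "\<dots> = (\<Sum>i\<in>{lo<..hi}. \<Sum>i'\<in>{lo<..hi}. \<integral>\<omega>. f (Xa i \<omega>) * f (Xa i' \<omega>) \<partial>M)"
    using int by (intro sum.cong refl int_sum) auto
  also have "\<dots> = (\<Sum>i\<in>{lo<..hi}. \<Sum>i'\<in>{lo<..hi}. (\<integral>x. (f x)^2 \<partial>mu) * pc i i')"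
    using f f0 by (intro sum.cong refl pair) auto
  finally show ?thesis by (simp add: ccab_def sum_distrib_left)
qed

lemma pc_Suc:
  assumes n: "1 \<le> n" and i: "1 \<le> i" "i \<le> n"
  shows "pc (Suc n) i = alpha / n * (\<Sum>u\<in>{1..n}. pc u i)"
proof -
  define F where "F u = {\<omega>\<in>space M. xi (Suc n) \<omega>} \<inter> {\<omega>\<in>space M. U n \<omega> = u} \<inter> {\<omega>\<in>space M. a u \<omega> = a i \<omega>}" for u
  have eq: "{\<omega>\<in>space M. a (Suc n) \<omega> = a i \<omega>} = (\<Union>u\<in>{1..n}. F u)"
  proof (rule set_eqI)
    fix \<omega>
    show "(\<omega> \<in> {\<omega>\<in>space M. a (Suc n) \<omega> = a i \<omega>}) = (\<omega> \<in> (\<Union>u\<in>{1..n}. F u))"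
    proof (cases "xi (Suc n) \<omega> \<and> 1 \<le> U n \<omega> \<and> U n \<omega> \<le> n")
      case True
      then have "a (Suc n) \<omega> = a (U n \<omega>) \<omega>" using n by (subst anc_Suc) simp
      then show ?thesis using True by (auto simp: F_def)
    next
      case False
      then have "a (Suc n) \<omega> = Suc n" by (subst anc_Suc) (use False in auto)
      moreover have "a i \<omega> \<le> n" using anc_le[of xi U i \<omega>] i by linarith
      ultimately show ?thesis using False by (auto simp: F_def)
    qed
  qed
  have Fs: "F u \<in> sets M" if "u \<in> {1..n}" for u
  proof -
    interpret sa: sigma_algebra "space M" "Sig (GI (Suc n))" by (rule sa_Sig)
    have "F u \<in> Sig (GI (Suc n))" unfolding F_def
      using that n i by (intro sa.Int xi_event U_event anc_eq_event) (auto simp: GI_def)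
    then show ?thesis using Sig_sets[OF GI_index] by blast
  qed
  have "pc (Suc n) i = measure M (\<Union>u\<in>{1..n}. F u)" unfolding pc_def eq ..
  also have "\<dots> = (\<Sum>u\<in>{1..n}. prob (F u))"
    using Fs by (intro measure_finite_Union) (auto simp: disjoint_family_on_def F_def)
  also have "\<dots> = (\<Sum>u\<in>{1..n}. alpha * (1 / real n) * pc u i)"
  proof (intro sum.cong refl)
    fix u assume u: "u \<in> {1..n}"
    have A: "{\<omega>\<in>space M. a u \<omega> = a i \<omega>} \<in> Sig (GI n)" using u i by (intro anc_eq_event) auto
    show "prob (F u) = alpha * (1 / real n) * pc u i"
      unfolding F_def pc_def using rec_event[OF n A, of u] u by simp
  qed
  finally show ?thesis by (simp add: sum_distrib_left)
qed

lemma ccab_Suc: assumes n: "1 \<le> n" shows "ccab 0 (Suc n) = ccab 0 n * (1 + 2 * alpha / n) + 1"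
proof -
  have S: "{0<..Suc n} = insert (Suc n) {0<..n}" by auto
  have I1: "{1..n} = {0<..n}" by auto
  have row: "(\<Sum>i\<in>{0<..n}. pc (Suc n) i) = alpha / n * ccab 0 n"
  proof -
    have "(\<Sum>i\<in>{0<..n}. pc (Suc n) i) = (\<Sum>i\<in>{0<..n}. alpha / n * (\<Sum>u\<in>{0<..n}. pc u i))"
    proof (intro sum.cong refl)
      fix i assume "i \<in> {0<..n}"
      then show "pc (Suc n) i = alpha / n * (\<Sum>u\<in>{0<..n}. pc u i)"
        using pc_Suc[of n i, unfolded I1] n by simp
    qed
    also have "\<dots> = alpha / n * (\<Sum>i\<in>{0<..n}. \<Sum>u\<in>{0<..n}. pc u i)"
      by (simp add: sum_distrib_left)
    also have "(\<Sum>i\<in>{0<..n}. \<Sum>u\<in>{0<..n}. pc u i) = ccab 0 n" unfolding ccab_def by (rule sum.swap)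
    finally show ?thesis .
  qed
  have col: "(\<Sum>i\<in>{0<..n}. pc i (Suc n)) = alpha / n * ccab 0 n" using row by (simp add: pc_sym)
  have "ccab 0 (Suc n) = pc (Suc n) (Suc n) + (\<Sum>i'\<in>{0<..n}. pc (Suc n) i') + ((\<Sum>i\<in>{0<..n}. pc i (Suc n)) + ccab 0 n)"
    unfolding ccab_def S by (simp add: sum.distrib)
  then have "ccab 0 (Suc n) = 1 + alpha / n * ccab 0 n + (alpha / n * ccab 0 n + ccab 0 n)"
    using row col pc_self by simp
  moreover have "real n > 0" using n by simp
  moreover have "ccab 0 n * (1 + 2 * alpha / n) = ccab 0 n + alpha / n * ccab 0 n + alpha / n * ccab 0 n"
    using \<open>real n > 0\<close> by (simp add: field_simps)
  ultimately show ?thesis by linarith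
qed

lemma ccab_nonneg: "0 \<le> ccab lo hi" unfolding ccab_def by (intro sum_nonneg pc_nonneg)

lemma ccab_bound: assumes al: "alpha \<le> 1/2" and n: "1 \<le> n" shows "ccab 0 n \<le> real n * harm n"
  using n
proof (induction n rule: nat_induct_at_least)
  case base
  have "{0<..Suc 0} = {1}" by auto
  then show ?case by (simp add: ccab_def pc_self harm_def)
next
  case (Suc n)
  let ?c = "ccab 0 n"
  have c0: "0 \<le> ?c" by (rule ccab_nonneg)
  have "ccab 0 (Suc n) = ?c * (1 + 2 * alpha / n) + 1" using Suc by (simp add: ccab_Suc)
  also have "\<dots> \<le> ?c * (1 + 1 / n) + 1"
    using al c0 Suc by (intro add_right_mono mult_left_mono) (auto simp: divide_right_mono)
  also have "\<dots> \<le> (real n * harm n) * (1 + 1 / n) + 1"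
    using Suc by (intro add_right_mono mult_right_mono) auto
  also have "\<dots> = real (Suc n) * harm (Suc n)"
    using Suc by (simp add: harm_Suc field_simps)
  finally show ?case .
qed

lemma ccab_super: assumes "lo \<le> mid" "mid \<le> hi" shows "ccab lo mid + ccab mid hi \<le> ccab lo hi"
proof -
  let ?A = "{lo<..mid}" and ?B = "{mid<..hi}"
  have U: "{lo<..hi} = ?A \<union> ?B" and D: "?A \<inter> ?B = {}" using assms by auto
  have "ccab lo hi = (\<Sum>i\<in>?A \<union> ?B. \<Sum>i'\<in>?A \<union> ?B. pc i i')" unfolding ccab_def U ..
  also have "\<dots> = ((\<Sum>i\<in>?A. \<Sum>i'\<in>?A. pc i i') + (\<Sum>i\<in>?A. \<Sum>i'\<in>?B. pc i i')) + ((\<Sum>i\<in>?B. \<Sum>i'\<in>?A. pc i i') + (\<Sum>i\<in>?B. \<Sum>i'\<in>?B. pc i i'))"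
    using D by (simp add: sum.union_disjoint sum.distrib)
  finally have eq: "ccab lo hi = \<dots>" .
  have "0 \<le> (\<Sum>i\<in>?A. \<Sum>i'\<in>?B. pc i i')" "0 \<le> (\<Sum>i\<in>?B. \<Sum>i'\<in>?A. pc i i')"
    by (intro sum_nonneg pc_nonneg)+
  then show ?thesis unfolding eq by (simp add: ccab_def)
qed

end


primrec Rch :: "(nat \<Rightarrow> real) \<Rightarrow> nat \<Rightarrow> nat \<Rightarrow> real" where
  "Rch s 0 lo = (s (lo + 1) - s lo)^2"
| "Rch s (Suc L) lo = (s (lo + 2^Suc L) - s lo)^2 + Rch s L lo + Rch s L (lo + 2^L)"

lemma Rch_nonneg: "0 \<le> Rch s L lo"
  by (induction L arbitrary: lo) auto

lemma Rch_ge: "(s (lo + 2^L) - s lo)^2 \<le> Rch s L lo"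
  by (cases L) (auto intro: add_nonneg_nonneg Rch_nonneg)

lemma sq_split:
  fixes x y l :: real assumes "0 \<le> l"
  shows "l * (x + y)^2 \<le> l * (l + 1) * x^2 + (l + 1) * y^2"
proof -
  have "l * (l + 1) * x^2 + (l + 1) * y^2 - l * (x + y)^2 = (l * x - y)^2"
    by (simp add: algebra_simps power2_eq_square)
  moreover have "0 \<le> (l * x - y)^2" by simp
  ultimately show ?thesis by linarith
qed

lemma chain: "t \<le> 2^L \<Longrightarrow> (s (lo + t) - s lo)^2 \<le> (real L + 1) * Rch s L lo"
proof (induction L arbitrary: lo t)
  case 0
  then have "t = 0 \<or> t = 1" by auto
  then show ?case by (auto intro: Rch_nonneg)
next
  case (Suc L)
  have R1: "Rch s L lo \<le> Rch s (Suc L) lo" and R2: "Rch s L (lo + 2^L) \<le> Rch s (Suc L) lo - Rch s L lo"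
    using Rch_nonneg[of s L lo] Rch_nonneg[of s L "lo + 2^L"] by (auto intro: Rch_nonneg)
  show ?case
  proof (cases "t \<le> 2^L")
    case True
    have "(s (lo + t) - s lo)^2 \<le> (real L + 1) * Rch s L lo" by (rule Suc.IH[OF True])
    also have "\<dots> \<le> (real (Suc L) + 1) * Rch s (Suc L) lo"
      using R1 Rch_nonneg[of s L lo] by (intro mult_mono) auto
    finally show ?thesis .
  next
    case False
    define t' where "t' = t - 2^L"
    have t': "t = 2^L + t'" "t' \<le> 2^L" using False Suc.prems by (auto simp: t'_def)
    define x where "x = s (lo + 2^L) - s lo"
    define y where "y = s (lo + 2^L + t') - s (lo + 2^L)"
    have xR: "x^2 \<le> Rch s L lo" unfolding x_def by (rule Rch_ge)
    have yR: "y^2 \<le> (real L + 1) * Rch s L (lo + 2^L)" unfolding y_def by (rule Suc.IH[OF t'(2)])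
    have eq: "s (lo + t) - s lo = x + y" by (simp add: x_def y_def t' add.assoc)
    have "(real L + 1) * (x + y)^2 \<le> (real L + 1) * (real L + 2) * x^2 + (real L + 2) * y^2"
      using sq_split[of "real L + 1" x y] by (simp add: add.assoc)
    also have "\<dots> \<le> (real L + 1) * (real L + 2) * Rch s L lo + (real L + 2) * ((real L + 1) * Rch s L (lo + 2^L))"
      using xR yR by (intro add_mono mult_left_mono) auto
    also have "\<dots> = (real L + 1) * ((real L + 2) * (Rch s L lo + Rch s L (lo + 2^L)))"
      by (simp add: algebra_simps)
    finally have "(x + y)^2 \<le> (real L + 2) * (Rch s L lo + Rch s L (lo + 2^L))"
      by (simp add: mult_le_cancel_left_pos add_pos_nonneg)
    also have "\<dots> \<le> (real (Suc L) + 1) * Rch s (Suc L) lo"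
      using R2 by (intro mult_mono) (auto intro: add_nonneg_nonneg Rch_nonneg)
    finally show ?thesis using eq by simp
  qed
qed

context srrw_ctx begin

lemma good_U_AE: "AE \<omega> in M. \<forall>n. 1 \<le> n \<longrightarrow> 1 \<le> U n \<omega> \<and> U n \<omega> \<le> n"
proof -
  have "AE \<omega> in M. 1 \<le> U n \<omega> \<and> U n \<omega> \<le> n" if n: "1 \<le> n" for n
  proof -
    have "prob {\<omega>\<in>space M. U n \<omega> \<in> {1..n}} = measure (distr M (count_space UNIV) (U n)) {1..n}"
      using n by (subst measure_distr[OF U_meas]) (auto simp: vimage_def Int_def conj_commute)
    also have "\<dots> = 1" using n by (simp add: U_distr measure_pmf_of_set)
    finally show ?thesis by (rule AE_mp[OF AE_prob_1]) auto
  qed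
  then show ?thesis by (subst AE_all_countable) auto
qed

lemma X_eq_Xa: "AE \<omega> in M. \<forall>i. 1 \<le> i \<longrightarrow> X i \<omega> = Xa i \<omega>"
  using good_U_AE AE_space
proof (eventually_elim)
  case (elim \<omega>)
  show ?case
  proof (intro allI impI)
    fix i :: nat assume "1 \<le> i"
    then show "X i \<omega> = Xa i \<omega>"
    proof (induction i rule: less_induct)
      case (less i)
      show ?case
      proof (cases "i = 1")
        case True then show ?thesis using elim X_1[of \<omega>] anc_1[of xi U \<omega>] by (simp add: Xa_def)
      next
        case False
        then obtain n where n: "i = Suc n" "1 \<le> n" using less.prems by (cases i) auto
        have U: "1 \<le> U n \<omega>" "U n \<omega> \<le> n" using elim n by auto
        show ?thesis
        proof (cases "xi (Suc n) \<omega>")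
          case True
          have "X i \<omega> = X (U n \<omega>) \<omega>" using n elim True by (simp add: X_Suc)
          also have "\<dots> = Xa (U n \<omega>) \<omega>" using U n by (intro less.IH) auto
          also have "\<dots> = Xa i \<omega>" using n U True by (simp add: Xa_def anc_Suc)
          finally show ?thesis .
        next
          case False
          then show ?thesis using n elim U by (simp add: X_Suc Xa_def anc_Suc)
        qed
      qed
    qed
  qed
qed

end

context srrw_ctx begin

definition W :: "(real^'d \<Rightarrow> real) \<Rightarrow> 'a \<Rightarrow> nat \<Rightarrow> real" where
  "W f \<omega> n = (\<Sum>i\<in>{0<..n}. f (Xa i \<omega>))"

lemma W_diff: "lo \<le> hi \<Longrightarrow> W f \<omega> hi - W f \<omega> lo = (\<Sum>i\<in>{lo<..hi}. f (Xa i \<omega>))"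
proof -
  assume "lo \<le> hi"
  then have "{0<..hi} = {0<..lo} \<union> {lo<..hi}" "{0<..lo} \<inter> {lo<..hi} = {}" by auto
  then show ?thesis unfolding W_def by (simp add: sum.union_disjoint)
qed

lemma W_0[simp]: "W f \<omega> 0 = 0" by (simp add: W_def)

lemma W_meas: "f \<in> borel_measurable borel \<Longrightarrow> (\<lambda>\<omega>. W f \<omega> n) \<in> borel_measurable M"
  unfolding W_def by (intro borel_measurable_sum measurable_compose[OF Xa_meas]) auto

lemma W_bound:
  fixes f :: "real^'d \<Rightarrow> real"
  shows "(\<And>x. \<bar>f x\<bar> \<le> B) \<Longrightarrow> \<bar>W f \<omega> n\<bar> \<le> real n * B"
proof -
  assume b: "\<And>x. \<bar>f x\<bar> \<le> B"
  have "\<bar>W f \<omega> n\<bar> \<le> (\<Sum>i\<in>{0<..n}. \<bar>f (Xa i \<omega>)\<bar>)" unfolding W_def by (rule sum_abs)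
  also have "\<dots> \<le> (\<Sum>i\<in>{0<..n}. B)" using b by (intro sum_mono) auto
  finally show ?thesis by simp
qed

lemma Wsq_int:
  fixes f :: "real^'d \<Rightarrow> real"
  assumes f: "f \<in> borel_measurable borel" "\<And>x. \<bar>f x\<bar> \<le> B"
  shows "integrable M (\<lambda>\<omega>. (W f \<omega> hi - W f \<omega> lo)^2)"
proof (rule bounded_integrable[where B="(real hi * B + real lo * B)^2"])
  show "(\<lambda>\<omega>. (W f \<omega> hi - W f \<omega> lo)^2) \<in> borel_measurable M"
    using W_meas[OF f(1)] by measurable
  fix \<omega>
  have "\<bar>W f \<omega> hi - W f \<omega> lo\<bar> \<le> real hi * B + real lo * B"
  proof -
    have "\<bar>W f \<omega> hi\<bar> \<le> real hi * B" by (rule W_bound[OF f(2)])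
    moreover have "\<bar>W f \<omega> lo\<bar> \<le> real lo * B" by (rule W_bound[OF f(2)])
    ultimately show ?thesis by linarith
  qed
  then have "\<bar>W f \<omega> hi - W f \<omega> lo\<bar>^2 \<le> (real hi * B + real lo * B)^2"
    by (intro power_mono) auto
  then show "\<bar>(W f \<omega> hi - W f \<omega> lo)^2\<bar> \<le> (real hi * B + real lo * B)^2" by (simp add: power2_abs)
qed

lemma Wdiff_exp:
  fixes f :: "real^'d \<Rightarrow> real"
  assumes f: "f \<in> borel_measurable borel" "\<And>x. \<bar>f x\<bar> \<le> B" and f0: "(\<integral>x. f x \<partial>mu) = 0"
    and lh: "lo \<le> hi"
  shows "(\<integral>\<omega>. (W f \<omega> hi - W f \<omega> lo)^2 \<partial>M) = (\<integral>x. (f x)^2 \<partial>mu) * ccab lo hi"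
  using second_moment[OF f f0, of lo hi] W_diff[OF lh] by simp

lemma Rch_int:
  fixes f :: "real^'d \<Rightarrow> real"
  assumes f: "f \<in> borel_measurable borel" "\<And>x. \<bar>f x\<bar> \<le> B"
  shows "integrable M (\<lambda>\<omega>. Rch (W f \<omega>) L lo)"
proof (induction L arbitrary: lo)
  case 0 then show ?case using Wsq_int[OF f] by simp
next
  case (Suc L) then show ?case using Wsq_int[OF f] by simp
qed

lemma Rch_exp:
  fixes f :: "real^'d \<Rightarrow> real"
  assumes f: "f \<in> borel_measurable borel" "\<And>x. \<bar>f x\<bar> \<le> B" and f0: "(\<integral>x. f x \<partial>mu) = 0"
  shows "(\<integral>\<omega>. Rch (W f \<omega>) L lo \<partial>M) \<le> (real L + 1) * ((\<integral>x. (f x)^2 \<partial>mu) * ccab lo (lo + 2^L))"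
proof (induction L arbitrary: lo)
  case 0
  then show ?case using Wdiff_exp[OF f f0, of lo "lo + 1"] by simp
next
  case (Suc L)
  let ?K = "(\<integral>x. (f x)^2 \<partial>mu)"
  have K0: "0 \<le> ?K" by simp
  have "(\<integral>\<omega>. Rch (W f \<omega>) (Suc L) lo \<partial>M)
     = (\<integral>\<omega>. (W f \<omega> (lo + 2^Suc L) - W f \<omega> lo)^2 \<partial>M) + (\<integral>\<omega>. Rch (W f \<omega>) L lo \<partial>M) + (\<integral>\<omega>. Rch (W f \<omega>) L (lo + 2^L) \<partial>M)"
    using Wsq_int[OF f] Rch_int[OF f] by simp
  also have "\<dots> \<le> ?K * ccab lo (lo + 2^Suc L) + (real L + 1) * (?K * ccab lo (lo + 2^L)) + (real L + 1) * (?K * ccab (lo + 2^L) (lo + 2^L + 2^L))"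
    using Suc.IH[of lo] Suc.IH[of "lo + 2^L"] Wdiff_exp[OF f f0, of lo "lo + 2^Suc L"] by simp
  also have "\<dots> \<le> ?K * ccab lo (lo + 2^Suc L) + (real L + 1) * (?K * ccab lo (lo + 2^Suc L))"
  proof -
    have "ccab lo (lo + 2^L) + ccab (lo + 2^L) (lo + 2^L + 2^L) \<le> ccab lo (lo + 2^Suc L)"
      using ccab_super[of lo "lo + 2^L" "lo + 2^L + 2^L"] by (simp add: add.assoc mult_2)
    then have "?K * ccab lo (lo + 2^L) + ?K * ccab (lo + 2^L) (lo + 2^L + 2^L) \<le> ?K * ccab lo (lo + 2^Suc L)"
      using K0 by (simp add: distrib_left[symmetric] mult_left_mono)
    then show ?thesis by (simp add: distrib_left[symmetric] mult_left_mono)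
  qed
  also have "\<dots> = (real (Suc L) + 1) * (?K * ccab lo (lo + 2^Suc L))" by (simp add: algebra_simps)
  finally show ?case .
qed

lemma max_exp:
  fixes f :: "real^'d \<Rightarrow> real"
  assumes f: "f \<in> borel_measurable borel" "\<And>x. \<bar>f x\<bar> \<le> B" and f0: "(\<integral>x. f x \<partial>mu) = 0"
    and al: "alpha \<le> 1/2"
  shows "(\<integral>\<omega>. (real L + 1) * Rch (W f \<omega>) L 0 \<partial>M) \<le> (real L + 1)^2 * (\<integral>x. (f x)^2 \<partial>mu) * (2^L * harm (2^L))"
proof -
  have "(\<integral>\<omega>. (real L + 1) * Rch (W f \<omega>) L 0 \<partial>M) = (real L + 1) * (\<integral>\<omega>. Rch (W f \<omega>) L 0 \<partial>M)" by simp
  also have "\<dots> \<le> (real L + 1) * ((real L + 1) * ((\<integral>x. (f x)^2 \<partial>mu) * ccab 0 (2^L)))"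
    using Rch_exp[OF f f0, of L 0] by (intro mult_left_mono) auto
  also have "\<dots> \<le> (real L + 1) * ((real L + 1) * ((\<integral>x. (f x)^2 \<partial>mu) * (2^L * harm (2^L))))"
    using ccab_bound[OF al, of "2^L"] by (intro mult_left_mono) auto
  finally show ?thesis by (simp add: power2_eq_square mult.assoc)
qed

lemma W_max: "t \<le> 2^L \<Longrightarrow> (W f \<omega> t)^2 \<le> (real L + 1) * Rch (W f \<omega>) L 0"
  using chain[of t L "W f \<omega>" 0] by simp

end


locale srrw_fun = srrw_ctx M mu alpha Y X xi U
  for M :: "'a measure" and mu :: "(real^'d) measure" and alpha :: real
    and Y X :: "nat \<Rightarrow> 'a \<Rightarrow> real^'d" and xi :: "nat \<Rightarrow> 'a \<Rightarrow> bool" and U :: "nat \<Rightarrow> 'a \<Rightarrow> nat" +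
  fixes h :: "real^'d \<Rightarrow> real" and p :: real
  assumes h_meas[measurable]: "h \<in> borel_measurable borel"
    and h_int: "integrable mu h" and h0: "(\<integral>x. h x \<partial>mu) = 0"
    and hp: "integrable mu (\<lambda>x. \<bar>h x\<bar> powr p)"
    and p1: "1 < p" and p2: "p \<le> 2"
begin

definition tr where "tr t x = (if \<bar>h x\<bar> \<le> t then h x else 0)"
definition tl where "tl t x = (if \<bar>h x\<bar> \<le> t then 0 else h x)"
definition mt where "mt t = (\<integral>x. tr t x \<partial>mu)"
definition ft where "ft t x = tr t x - mt t"
definition Kp where "Kp = (\<integral>x. \<bar>h x\<bar> powr p \<partial>mu)"

interpretation mu: prob_space mu by (rule mu_prob)

lemma measurable_mu_borel: "measurable mu = measurable borel"
  by (intro ext measurable_cong_sets) (simp_all add: sets_mu)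

lemma h_meas_mu[measurable]: "h \<in> borel_measurable mu"
  using h_meas by (simp add: measurable_mu_borel)

lemma tr_meas[measurable]: "tr t \<in> borel_measurable borel" unfolding tr_def by measurable
lemma tl_meas[measurable]: "tl t \<in> borel_measurable borel" unfolding tl_def by measurable
lemma ft_meas[measurable]: "ft t \<in> borel_measurable borel" unfolding ft_def by measurable

lemma tr_int: "integrable mu (tr t)"
  by (rule Bochner_Integration.integrable_bound[OF h_int]) (auto simp: tr_def measurable_mu_borel)
lemma tl_int: "integrable mu (tl t)"
  by (rule Bochner_Integration.integrable_bound[OF h_int]) (auto simp: tl_def measurable_mu_borel)

lemma h_split: "h x = tr t x + tl t x" by (simp add: tr_def tl_def)

lemma Kp_nonneg: "0 \<le> Kp" unfolding Kp_def by simp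

lemma mt_eq: "mt t = - (\<integral>x. tl t x \<partial>mu)"
proof -
  have "0 = (\<integral>x. tr t x + tl t x \<partial>mu)" using h0 by (simp add: h_split[symmetric])
  also have "\<dots> = mt t + (\<integral>x. tl t x \<partial>mu)" unfolding mt_def using tr_int tl_int by simp
  finally show ?thesis by simp
qed

lemma tl_pt: assumes t: "0 < t" shows "\<bar>tl t x\<bar> \<le> \<bar>h x\<bar> powr p * t powr (1 - p)"
proof (cases "\<bar>h x\<bar> \<le> t")
  case True then show ?thesis by (simp add: tl_def)
next
  case False
  then have hx: "t < \<bar>h x\<bar>" by simp
  have e: "\<bar>h x\<bar> powr p * \<bar>h x\<bar> powr (1 - p) = \<bar>h x\<bar>"
  proof -
    have "\<bar>h x\<bar> powr p * \<bar>h x\<bar> powr (1 - p) = \<bar>h x\<bar> powr (p + (1 - p))" by (simp only: powr_add)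
    also have "\<dots> = \<bar>h x\<bar>" using hx t by simp
    finally show ?thesis .
  qed
  have "\<bar>h x\<bar> powr (1 - p) \<le> t powr (1 - p)"
    by (rule powr_mono2') (use hx t p1 in auto)
  then have "\<bar>h x\<bar> powr p * \<bar>h x\<bar> powr (1 - p) \<le> \<bar>h x\<bar> powr p * t powr (1 - p)"
    by (rule mult_left_mono) simp
  then show ?thesis using False e by (simp add: tl_def)
qed

lemma tr_pt: assumes t: "0 < t" shows "(tr t x)^2 \<le> \<bar>h x\<bar> powr p * t powr (2 - p)"
proof (cases "\<bar>h x\<bar> \<le> t \<and> h x \<noteq> 0")
  case False then show ?thesis by (auto simp: tr_def)
next
  case True
  then have hx: "0 < \<bar>h x\<bar>" "\<bar>h x\<bar> \<le> t" by auto
  have "(tr t x)^2 = \<bar>h x\<bar>^2" using True by (simp add: tr_def)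
  also have "\<dots> = \<bar>h x\<bar> powr 2" using hx by (simp add: powr_numeral)
  also have "\<dots> = \<bar>h x\<bar> powr (p + (2 - p))" by simp
  also have "\<dots> = \<bar>h x\<bar> powr p * \<bar>h x\<bar> powr (2 - p)" by (simp only: powr_add)
  also have "\<dots> \<le> \<bar>h x\<bar> powr p * t powr (2 - p)"
  proof (rule mult_left_mono)
    show "\<bar>h x\<bar> powr (2 - p) \<le> t powr (2 - p)" by (rule powr_mono2) (use hx p2 in auto)
  qed simp
  finally show ?thesis .
qed

lemma tl_abs_int: assumes t: "0 < t" shows "(\<integral>x. \<bar>tl t x\<bar> \<partial>mu) \<le> Kp * t powr (1 - p)"
proof -
  have "(\<integral>x. \<bar>tl t x\<bar> \<partial>mu) \<le> (\<integral>x. \<bar>h x\<bar> powr p * t powr (1 - p) \<partial>mu)"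
    using tl_int hp tl_pt[OF t] by (intro integral_mono) auto
  also have "\<dots> = Kp * t powr (1 - p)" unfolding Kp_def by simp
  finally show ?thesis .
qed

lemma mt_bound: assumes t: "0 < t" shows "\<bar>mt t\<bar> \<le> Kp * t powr (1 - p)"
proof -
  have "\<bar>mt t\<bar> = \<bar>\<integral>x. tl t x \<partial>mu\<bar>" by (simp add: mt_eq)
  also have "\<dots> \<le> (\<integral>x. \<bar>tl t x\<bar> \<partial>mu)" by (rule integral_abs_bound)
  also have "\<dots> \<le> Kp * t powr (1 - p)" by (rule tl_abs_int[OF t])
  finally show ?thesis .
qed

lemma tr_bound: "0 \<le> t \<Longrightarrow> \<bar>tr t x\<bar> \<le> t" by (simp add: tr_def)

lemma mt_le: assumes t: "0 \<le> t" shows "\<bar>mt t\<bar> \<le> t"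
proof -
  have "\<bar>mt t\<bar> \<le> (\<integral>x. \<bar>tr t x\<bar> \<partial>mu)" unfolding mt_def by (rule integral_abs_bound)
  also have "\<dots> \<le> (\<integral>x. t \<partial>mu)"
    using tr_int tr_bound[OF t] by (intro integral_mono) auto
  also have "\<dots> = t" by (simp add: mu.prob_space)
  finally show ?thesis .
qed

lemma ft_bound: "0 \<le> t \<Longrightarrow> \<bar>ft t x\<bar> \<le> 2 * t"
  using tr_bound[of t x] mt_le[of t] unfolding ft_def by linarith

lemma ft0: "(\<integral>x. ft t x \<partial>mu) = 0"
  unfolding ft_def mt_def using tr_int by (simp add: mu.prob_space)

lemma ft2: assumes t: "0 < t" shows "(\<integral>x. (ft t x)^2 \<partial>mu) \<le> Kp * t powr (2 - p)"
proof -
  have tr2_int: "integrable mu (\<lambda>x. (tr t x)^2)"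
  proof (rule mu.integrable_const_bound[where B="t^2"])
    have "(tr t x)^2 \<le> t^2" for x
      using tr_bound[of t x] t abs_le_square_iff[of "tr t x" t] by simp
    then show "AE x in mu. norm ((tr t x)^2) \<le> t^2" by simp
  qed (simp add: measurable_mu_borel)
  have "(\<integral>x. (ft t x)^2 \<partial>mu) = (\<integral>x. (tr t x)^2 - 2 * mt t * tr t x + (mt t)^2 \<partial>mu)"
    unfolding ft_def by (intro Bochner_Integration.integral_cong refl) (simp add: power2_diff algebra_simps)
  also have "\<dots> = (\<integral>x. (tr t x)^2 \<partial>mu) - 2 * mt t * mt t + (mt t)^2"
    using tr2_int tr_int by (simp add: mt_def mu.prob_space)
  also have "\<dots> \<le> (\<integral>x. (tr t x)^2 \<partial>mu)" by (simp add: power2_eq_square)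
  also have "\<dots> \<le> (\<integral>x. \<bar>h x\<bar> powr p * t powr (2 - p) \<partial>mu)"
    using tr2_int hp tr_pt[OF t] by (intro integral_mono) auto
  also have "\<dots> = Kp * t powr (2 - p)" unfolding Kp_def by simp
  finally show ?thesis .
qed

definition Sn where "Sn \<omega> n = (\<Sum>i\<in>{0<..n}. h (Xa i \<omega>))"

lemma Sn_decomp: "Sn \<omega> n = W (ft t) \<omega> n + real n * mt t + (\<Sum>i\<in>{0<..n}. tl t (Xa i \<omega>))"
  unfolding Sn_def W_def ft_def by (simp add: sum.distrib sum_subtractf h_split[of _ t] algebra_simps)

lemma h_Xa_distr: "1 \<le> i \<Longrightarrow> g \<in> borel_measurable borel \<Longrightarrow> (\<integral>\<omega>. g (Xa i \<omega>) \<partial>M) = (\<integral>x. g x \<partial>mu)"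
  for g :: "real^'d \<Rightarrow> real"
  using integral_distr[OF Xa_meas, of i g] Xa_distr[of i] by simp

lemma h_Xa_int: "1 \<le> i \<Longrightarrow> g \<in> borel_measurable borel \<Longrightarrow> integrable mu g \<Longrightarrow> integrable M (\<lambda>\<omega>. g (Xa i \<omega>))"
  for g :: "real^'d \<Rightarrow> real"
  using integrable_distr_eq[OF Xa_meas, of i g] Xa_distr[of i] by simp

lemma prob_Xa: "1 \<le> i \<Longrightarrow> B \<in> sets borel \<Longrightarrow> prob {\<omega>\<in>space M. Xa i \<omega> \<in> B} = measure mu B"
  using measure_distr[OF Xa_meas, of i B] Xa_distr[of i] by (simp add: vimage_def Int_def conj_commute)

end


lemma geo_ind_sum:
  fixes y :: real assumes y: "0 \<le> y"
  shows "(\<Sum>L<N. (2::real)^L * (if 2^L < y then 1 else 0)) \<le> 2 * y"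
proof (induction N)
  case 0 then show ?case using y by simp
next
  case (Suc N)
  show ?case
  proof (cases "2^N < y")
    case True
    have "(\<Sum>L<Suc N. (2::real)^L * (if 2^L < y then 1 else 0)) \<le> (\<Sum>L<Suc N. (2::real)^L)"
      by (intro sum_mono) auto
    also have "\<dots> = 2^Suc N - 1" by (induction N) auto
    also have "\<dots> < 2 * y" using True by simp
    finally show ?thesis by simp
  next
    case False then show ?thesis using Suc by simp
  qed
qed

lemma exists_dyadic: assumes "2 \<le> n" shows "\<exists>L. 1 \<le> L \<and> 2^(L-1) < n \<and> n \<le> (2::nat)^L"
proof -
  define L where "L = (LEAST L. n \<le> (2::nat)^L)"
  have ex: "n \<le> 2^n" using less_exp[of n] by simp
  have nL: "n \<le> 2^L" unfolding L_def by (rule LeastI[of _ n]) (rule ex)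
  have L1: "1 \<le> L"
  proof (rule ccontr)
    assume "\<not> 1 \<le> L" then have "L = 0" by simp
    then show False using nL assms by simp
  qed
  have "\<not> n \<le> 2^(L-1)" unfolding L_def
    by (rule not_less_Least) (use L1 in \<open>simp add: L_def[symmetric]\<close>)
  then show ?thesis using L1 nL by auto
qed

lemma harm_le_ln: "1 \<le> n \<Longrightarrow> harm n \<le> 1 + ln (real n)"
  using euler_mascheroni_sequence_decreasing[of 1 n] by (simp add: harm_def)

context srrw_fun begin

interpretation mu: prob_space mu by (rule mu_prob)

definition tL :: "nat \<Rightarrow> real" where "tL L = 2 powr (real L / p)"

lemma tL_pos: "0 < tL L" by (simp add: tL_def)

definition Bad1 where "Bad1 L = {\<omega>\<in>space M. \<exists>i\<in>{0<..(2::nat)^L}. 2^L < \<bar>h (Xa i \<omega>)\<bar> powr p}"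

lemma Bad1_sets: "Bad1 L \<in> sets M"
proof -
  have "Bad1 L = (\<Union>i\<in>{0<..(2::nat)^L}. {\<omega>\<in>space M. 2^L < \<bar>h (Xa i \<omega>)\<bar> powr p})"
    unfolding Bad1_def by auto
  also have "\<dots> \<in> sets M"
  proof (intro sets.finite_UN ballI)
    fix i :: nat assume "i \<in> {0<..2^L}"
    then have [measurable]: "Xa i \<in> borel_measurable M" by (intro Xa_meas) auto
    show "{\<omega>\<in>space M. 2^L < \<bar>h (Xa i \<omega>)\<bar> powr p} \<in> sets M" by measurable
  qed simp
  finally show ?thesis .
qed

lemma Bad1_prob: "prob (Bad1 L) \<le> 2^L * measure mu {x. 2^L < \<bar>h x\<bar> powr p}"
proof -
  have "Bad1 L = (\<Union>i\<in>{0<..(2::nat)^L}. {\<omega>\<in>space M. Xa i \<omega> \<in> {x. 2^L < \<bar>h x\<bar> powr p}})"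
    unfolding Bad1_def by auto
  also have "prob \<dots> \<le> (\<Sum>i\<in>{0<..(2::nat)^L}. prob {\<omega>\<in>space M. Xa i \<omega> \<in> {x. 2^L < \<bar>h x\<bar> powr p}})"
  proof (intro measure_UNION_le)
    fix i :: nat assume "i \<in> {0<..2^L}"
    then have [measurable]: "Xa i \<in> borel_measurable M" by (intro Xa_meas) auto
    show "{\<omega>\<in>space M. Xa i \<omega> \<in> {x. 2^L < \<bar>h x\<bar> powr p}} \<in> sets M" by measurable
  qed simp
  also have "\<dots> = (\<Sum>i\<in>{0<..(2::nat)^L}. measure mu {x. 2^L < \<bar>h x\<bar> powr p})"
    by (intro sum.cong refl prob_Xa) auto
  finally show ?thesis by simp
qed

lemma set_mu: "{x. c < \<bar>h x\<bar> powr p} \<in> sets mu"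
proof -
  have "{x \<in> space borel. c < \<bar>h x\<bar> powr p} \<in> sets borel" by measurable
  then show ?thesis by (simp add: sets_mu)
qed

lemma ind_mu_int: "integrable mu (indicator {x. c < \<bar>h x\<bar> powr p} :: _ \<Rightarrow> real)"
  by (rule mu.integrable_const_bound[where B=1]) (auto simp: set_mu indicator_def)

lemma Bad1_summable: "summable (\<lambda>L. prob (Bad1 L))"
proof (rule summable_comparison_test'[where N=0])
  let ?q = "\<lambda>L. 2^L * measure mu {x. 2^L < \<bar>h x\<bar> powr p}"
  show "summable ?q"
  proof (rule summableI_nonneg_bounded[where x="2 * Kp"])
    fix N
    have "(\<Sum>L<N. ?q L) = (\<Sum>L<N. \<integral>x. (2::real)^L * indicator {x. 2^L < \<bar>h x\<bar> powr p} x \<partial>mu)"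
      by (intro sum.cong refl) (simp add: space_mu)
    also have "\<dots> = (\<integral>x. (\<Sum>L<N. (2::real)^L * indicator {x. 2^L < \<bar>h x\<bar> powr p} x) \<partial>mu)"
      by (rule Bochner_Integration.integral_sum[symmetric]) (auto simp: ind_mu_int)
    also have "\<dots> \<le> (\<integral>x. 2 * \<bar>h x\<bar> powr p \<partial>mu)"
    proof (rule integral_mono)
      show "integrable mu (\<lambda>x. \<Sum>L<N. (2::real)^L * indicator {x. 2^L < \<bar>h x\<bar> powr p} x)"
        by (intro Bochner_Integration.integrable_sum integrable_mult_right ind_mu_int)
      show "integrable mu (\<lambda>x. 2 * \<bar>h x\<bar> powr p)" using hp by simp
      fix x show "(\<Sum>L<N. (2::real)^L * indicator {x. 2^L < \<bar>h x\<bar> powr p} x) \<le> 2 * \<bar>h x\<bar> powr p"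
      proof -
        have e: "(2::real)^L * indicator {x. 2^L < \<bar>h x\<bar> powr p} x = 2^L * (if 2^L < \<bar>h x\<bar> powr p then 1 else 0)" for L
          by (simp add: indicator_def)
        show ?thesis unfolding e by (rule geo_ind_sum) simp
      qed
    qed
    finally show "(\<Sum>L<N. ?q L) \<le> 2 * Kp" by (simp add: Kp_def)
  qed simp
  show "norm (prob (Bad1 n)) \<le> ?q n" for n using Bad1_prob by simp
qed

lemma not_Bad1:
  assumes w: "\<omega> \<in> space M" "\<omega> \<notin> Bad1 L" and i: "i \<in> {0<..(2::nat)^L}"
  shows "\<bar>h (Xa i \<omega>)\<bar> \<le> tL L"
proof -
  have "\<not> (\<exists>i\<in>{0<..(2::nat)^L}. 2^L < \<bar>h (Xa i \<omega>)\<bar> powr p)" using w unfolding Bad1_def by simp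
  then have le: "\<bar>h (Xa i \<omega>)\<bar> powr p \<le> 2^L" using i by (simp add: not_less)
  have "\<bar>h (Xa i \<omega>)\<bar> = (\<bar>h (Xa i \<omega>)\<bar> powr p) powr (1 / p)"
    using p1 by (simp add: powr_powr)
  also have "\<dots> \<le> (2^L) powr (1 / p)"
    by (rule powr_mono2) (use le p1 in auto)
  also have "\<dots> = tL L"
    unfolding tL_def by (simp add: powr_realpow[symmetric] powr_powr)
  finally show ?thesis .
qed

end


lemma thr_le:
  fixes e :: real
  assumes L: "1 \<le> L" and n: "2^(L-1) < n" and e: "0 \<le> e" "e \<le> 1"
  shows "2 powr (real L * e) / 2 \<le> real n powr e"
proof -
  have "2 powr (real L * e) = 2 powr ((real L - 1) * e) * 2 powr e"
    by (simp add: powr_add[symmetric] algebra_simps)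
  also have "\<dots> \<le> 2 powr ((real L - 1) * e) * 2"
  proof (rule mult_left_mono)
    show "(2::real) powr e \<le> 2" using powr_mono[of e 1 2] e by simp
  qed simp
  finally have "2 powr (real L * e) / 2 \<le> 2 powr ((real L - 1) * e)" by simp
  also have "\<dots> = (2 powr (real (L - 1))) powr e" using L by (simp add: powr_powr of_nat_diff)
  also have "\<dots> = real (2^(L-1)) powr e" by (simp add: powr_realpow)
  also have "\<dots> \<le> real n powr e" using n e by (intro powr_mono2) auto
  finally show ?thesis .
qed

lemma pow2_combine: "(2::real) powr a * 2 powr b / (2 powr c / 4) = 4 * 2 powr (a + b - c)"
  by (simp add: powr_add powr_diff)

lemma alg_rearr: "(T::real) \<noteq> 0 \<Longrightarrow> (Q^2 * (K * A) * (B * Q)) / T = K * Q^3 * (A * B / T)"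
  by (simp add: field_simps power2_eq_square power3_eq_cube)

context srrw_fun begin

lemma tpow_le:
  assumes n: "1 \<le> n" "n \<le> (2::nat)^L"
  shows "real n * tL L powr (1 - p) \<le> real n powr (1 / p)"
proof -
  have "tL L powr (1 - p) = (2 powr real L) powr ((1 - p) / p)"
    unfolding tL_def by (simp add: powr_powr)
  also have "\<dots> = real (2^L) powr ((1 - p) / p)" by (simp add: powr_realpow)
  also have "\<dots> \<le> real n powr ((1 - p) / p)"
    using n p1 by (intro powr_mono2') (auto simp: divide_nonpos_pos)
  finally have "real n * tL L powr (1 - p) \<le> real n * real n powr ((1 - p) / p)"
    by (intro mult_left_mono) auto
  also have "\<dots> = real n powr (1 + (1 - p) / p)" using n by (simp add: powr_add)
  also have "1 + (1 - p) / p = 1 / p" using p1 by (simp add: field_simps)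
  finally show ?thesis by simp
qed

definition thr :: "real \<Rightarrow> nat \<Rightarrow> real" where "thr v L = 2 powr (real L * (1 - v)) / 2"

definition Bad2 where
  "Bad2 v L = {\<omega>\<in>space M. (thr v L)^2 \<le> (real L + 1) * Rch (W (ft (tL L)) \<omega>) L 0}"

lemma ft_tL: "\<bar>ft (tL L) x\<bar> \<le> 2 * tL L" using ft_bound[of "tL L"] tL_pos[of L] by simp

lemma Rch_meas[measurable]: "(\<lambda>\<omega>. Rch (W (ft (tL L)) \<omega>) L 0) \<in> borel_measurable M"
  using Rch_int[OF ft_meas ft_tL] by (rule borel_measurable_integrable)

lemma Bad2_sets: "Bad2 v L \<in> sets M"
  unfolding Bad2_def by measurable

lemma thr_pos: "0 < thr v L" by (simp add: thr_def)

lemma Bad2_prob: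
  assumes al: "alpha \<le> 1/2"
  shows "prob (Bad2 v L) \<le> 4 * Kp * (real L + 1)^3 * 2 powr (- (2 * (1 - 1/p - v)) * real L)"
proof -
  let ?t = "tL L"
  let ?Z = "\<lambda>\<omega>. (real L + 1) * Rch (W (ft ?t) \<omega>) L 0"
  have Zint: "integrable M ?Z" using Rch_int[OF ft_meas ft_tL] by simp
  have "prob (Bad2 v L) \<le> (\<integral>\<omega>. ?Z \<omega> \<partial>M) / (thr v L)^2"
    unfolding Bad2_def using Zint thr_pos[of v L]
    by (intro integral_Markov_inequality_measure[where A="space M"]) (auto intro!: mult_nonneg_nonneg Rch_nonneg)
  also have "\<dots> \<le> ((real L + 1)^2 * (\<integral>x. (ft ?t x)^2 \<partial>mu) * (2^L * harm (2^L))) / (thr v L)^2"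
    using max_exp[OF ft_meas ft_tL ft0 al, of L] by (intro divide_right_mono) auto
  also have "\<dots> \<le> ((real L + 1)^2 * (Kp * ?t powr (2 - p)) * (2^L * (real L + 1))) / (thr v L)^2"
  proof (intro divide_right_mono mult_mono mult_left_mono)
    show "(\<integral>x. (ft ?t x)^2 \<partial>mu) \<le> Kp * ?t powr (2 - p)" by (rule ft2[OF tL_pos])
    have "harm (2^L) \<le> 1 + ln (real (2^L))" by (rule harm_le_ln) simp
    also have "ln (real ((2::nat)^L)) = real L * ln 2" by (simp add: ln_realpow)
    also have "real L * ln 2 \<le> real L * 1" using ln_2_less_1 by (intro mult_left_mono) auto
    finally show "harm (2^L) \<le> real L + 1" by simp
  qed (auto simp: Kp_nonneg harm_nonneg)
  also have "\<dots> = 4 * Kp * (real L + 1)^3 * 2 powr (- (2 * (1 - 1/p - v)) * real L)"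
  proof -
    have t: "?t powr (2 - p) = 2 powr (real L / p * (2 - p))" unfolding tL_def by (simp add: powr_powr)
    have two: "(2::real)^L = 2 powr real L" by (simp add: powr_realpow)
    have th: "(thr v L)^2 = 2 powr (2 * (real L * (1 - v))) / 4"
      unfolding thr_def by (simp add: power2_eq_square powr_add[symmetric] algebra_simps)
    have ex: "real L / p * (2 - p) + real L - 2 * (real L * (1 - v)) = - (2 * (1 - 1/p - v)) * real L"
      using p1 by (simp add: field_simps)
    have key: "?t powr (2 - p) * 2^L / (thr v L)^2 = 4 * 2 powr (- (2 * (1 - 1/p - v)) * real L)"
      unfolding t two th ex[symmetric] by (rule pow2_combine)
    have "((real L + 1)^2 * (Kp * ?t powr (2 - p)) * (2^L * (real L + 1))) / (thr v L)^2
       = Kp * (real L + 1)^3 * (?t powr (2 - p) * 2^L / (thr v L)^2)"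
      using thr_pos[of v L] by (intro alg_rearr) simp
    then show ?thesis unfolding key by simp
  qed
  finally show ?thesis .
qed

lemma poly_geo_summable:
  assumes c: "0 < c"
  shows "summable (\<lambda>L::nat. (real L + 1)^3 * 2 powr (- c * real L))"
proof (rule summable_comparison_test_ev)
  show "summable (\<lambda>L::nat. inverse (real L ^ 2))" by (rule inverse_power_summable) simp
  have "eventually (\<lambda>L::nat. (real L + 1)^3 * 2 powr (- c * real L) \<le> inverse (real L ^ 2)) sequentially"
    using c by real_asymp
  then show "eventually (\<lambda>L. norm ((real L + 1)^3 * 2 powr (- c * real L)) \<le> inverse (real L ^ 2)) sequentially"
    by (rule eventually_mono) simp
qed

lemma Bad2_summable:
  assumes al: "alpha \<le> 1/2" and v: "v < 1 - 1/p"
  shows "summable (\<lambda>L. prob (Bad2 v L))"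
proof (rule summable_comparison_test'[where N=0])
  have "0 < 2 * (1 - 1/p - v)" using v by simp
  from summable_mult[OF poly_geo_summable[OF this], of "4 * Kp"]
  show "summable (\<lambda>L. 4 * Kp * (real L + 1)^3 * 2 powr (- (2 * (1 - 1/p - v)) * real L))"
    by (simp add: mult.assoc)
  show "norm (prob (Bad2 v n)) \<le> 4 * Kp * (real n + 1)^3 * 2 powr (- (2 * (1 - 1/p - v)) * real n)" for n
    using Bad2_prob[OF al, of v n] by simp
qed

end


context srrw_fun begin

lemma Sn_AE:
  assumes al: "alpha \<le> 1/2" and v: "0 < v" "v < 1 - 1/p"
  shows "AE \<omega> in M. eventually (\<lambda>n. \<bar>Sn \<omega> n\<bar> \<le> real n powr (1 - v) + Kp * real n powr (1/p)) sequentially"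
proof -
  have A1: "AE \<omega> in M. eventually (\<lambda>L. \<omega> \<in> space M - Bad1 L) sequentially"
    by (rule borel_cantelli_AE1[OF Bad1_sets _ Bad1_summable]) (simp add: less_top[symmetric])
  have A2: "AE \<omega> in M. eventually (\<lambda>L. \<omega> \<in> space M - Bad2 v L) sequentially"
    by (rule borel_cantelli_AE1[OF Bad2_sets _ Bad2_summable[OF al v(2)]]) (simp add: less_top[symmetric])
  show ?thesis
    using A1 A2
  proof eventually_elim
    case (elim \<omega>)
    from eventually_conj[OF elim(1) elim(2)] obtain L0 where
      L0: "\<And>L. L \<ge> L0 \<Longrightarrow> \<omega> \<in> space M - Bad1 L \<and> \<omega> \<in> space M - Bad2 v L"
      unfolding eventually_sequentially by blast
    have w: "\<omega> \<in> space M" using L0[of L0] by simp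
    show ?case unfolding eventually_sequentially
    proof (intro exI allI impI)
      fix n :: nat assume nbig: "2^L0 + 2 \<le> n"
      then obtain L where L: "1 \<le> L" "2^(L-1) < n" "n \<le> (2::nat)^L"
        using exists_dyadic[of n] by auto
      have LL0: "L0 \<le> L"
      proof (rule ccontr)
        assume "\<not> L0 \<le> L"
        then have "(2::nat)^L \<le> 2^L0" by (intro power_increasing) auto
        then show False using L nbig by linarith
      qed
      have nB1: "\<omega> \<notin> Bad1 L" and nB2: "\<omega> \<notin> Bad2 v L" using L0[OF LL0] by auto
      let ?t = "tL L"
      have tail: "(\<Sum>i\<in>{0<..n}. tl ?t (Xa i \<omega>)) = 0"
      proof (intro sum.neutral ballI)
        fix i assume "i \<in> {0<..n}"
        then have "i \<in> {0<..(2::nat)^L}" using L by auto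
        then have "\<bar>h (Xa i \<omega>)\<bar> \<le> ?t" by (rule not_Bad1[OF w nB1])
        then show "tl ?t (Xa i \<omega>) = 0" by (simp add: tl_def)
      qed
      have "(W (ft ?t) \<omega> n)^2 \<le> (real L + 1) * Rch (W (ft ?t) \<omega>) L 0" by (rule W_max) (use L in auto)
      also have "\<dots> < (thr v L)^2" using nB2 w by (simp add: Bad2_def not_le)
      finally have "\<bar>W (ft ?t) \<omega> n\<bar>^2 < (thr v L)^2" by (simp add: power2_abs)
      then have Wb: "\<bar>W (ft ?t) \<omega> n\<bar> < thr v L" by (rule power_less_imp_less_base) (simp add: less_imp_le[OF thr_pos])
      have "0 < 1/p" using p1 by simp
      then have "v \<le> 1" using v by linarith
      then have "thr v L \<le> real n powr (1 - v)" unfolding thr_def using L v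
        by (intro thr_le) auto
      with Wb have W1: "\<bar>W (ft ?t) \<omega> n\<bar> \<le> real n powr (1 - v)" by simp
      have "\<bar>real n * mt ?t\<bar> \<le> real n * (Kp * ?t powr (1 - p))"
        by (simp add: abs_mult mult_left_mono mt_bound[OF tL_pos])
      also have "\<dots> = Kp * (real n * ?t powr (1 - p))" by simp
      also have "\<dots> \<le> Kp * real n powr (1/p)" using L nbig
        by (intro mult_left_mono tpow_le) (auto simp: Kp_nonneg)
      finally have m1: "\<bar>real n * mt ?t\<bar> \<le> Kp * real n powr (1/p)" .
      have "Sn \<omega> n = W (ft ?t) \<omega> n + real n * mt ?t" using Sn_decomp[of \<omega> n ?t] tail by simp
      then show "\<bar>Sn \<omega> n\<bar> \<le> real n powr (1 - v) + Kp * real n powr (1/p)" using W1 m1 by linarith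
    qed
  qed
qed

end


context srrw_fun begin

lemma L1_le_L2:
  fixes g :: "'a \<Rightarrow> real"
  assumes g: "g \<in> borel_measurable M" "\<And>\<omega>. \<bar>g \<omega>\<bar> \<le> B"
  shows "(\<integral>\<omega>. \<bar>g \<omega>\<bar> \<partial>M) \<le> sqrt (\<integral>\<omega>. (g \<omega>)^2 \<partial>M)"
proof -
  let ?c = "(\<integral>\<omega>. \<bar>g \<omega>\<bar> \<partial>M)"
  have i1: "integrable M (\<lambda>\<omega>. \<bar>g \<omega>\<bar>)" using g by (intro bounded_integrable[where B=B]) auto
  have i2: "integrable M (\<lambda>\<omega>. (g \<omega>)^2)"
  proof (rule bounded_integrable[where B="B^2"])
    fix \<omega> have "\<bar>g \<omega>\<bar>^2 \<le> B^2" using g(2)[of \<omega>] by (intro power_mono) auto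
    then show "\<bar>(g \<omega>)^2\<bar> \<le> B^2" by (simp add: power2_abs)
  qed (use g in auto)
  have "0 \<le> (\<integral>\<omega>. (\<bar>g \<omega>\<bar> - ?c)^2 \<partial>M)" by simp
  also have "\<dots> = (\<integral>\<omega>. (g \<omega>)^2 - 2 * ?c * \<bar>g \<omega>\<bar> + ?c^2 \<partial>M)"
    by (intro Bochner_Integration.integral_cong refl) (simp add: power2_diff power2_abs algebra_simps)
  also have "\<dots> = (\<integral>\<omega>. (g \<omega>)^2 \<partial>M) - 2 * ?c * ?c + ?c^2"
    using i1 i2 by (simp add: prob_space)
  finally have "?c^2 \<le> (\<integral>\<omega>. (g \<omega>)^2 \<partial>M)" by (simp add: power2_eq_square)
  then show ?thesis by (rule real_le_rsqrt)
qed

lemma Sn_L1: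
  assumes al: "alpha \<le> 1/2" and n: "1 \<le> n"
  shows "(\<integral>\<omega>. \<bar>Sn \<omega> n\<bar> \<partial>M) \<le> real n powr (1/p) * (sqrt (Kp * (1 + ln (real n))) + 2 * Kp)"
proof -
  define t where "t = real n powr (1/p)"
  have t0: "0 < t" using n by (simp add: t_def)
  have tl_i: "integrable M (\<lambda>\<omega>. \<bar>tl t (Xa i \<omega>)\<bar>)" if "1 \<le> i" for i
    using h_Xa_int[OF that _ integrable_abs[OF tl_int[of t]]] by simp
  have W_m: "(\<lambda>\<omega>. W (ft t) \<omega> n) \<in> borel_measurable M" by (rule W_meas) simp
  have W_b: "\<bar>W (ft t) \<omega> n\<bar> \<le> real n * (2 * t)" for \<omega>
    by (rule W_bound) (use ft_bound less_imp_le[OF t0] in auto)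
  have W_i: "integrable M (\<lambda>\<omega>. \<bar>W (ft t) \<omega> n\<bar>)"
    by (rule bounded_integrable[where B="real n * (2 * t)"]) (use W_m W_b in auto)
  have T_i: "integrable M (\<lambda>\<omega>. \<Sum>i\<in>{0<..n}. \<bar>tl t (Xa i \<omega>)\<bar>)"
    by (rule Bochner_Integration.integrable_sum) (use tl_i in auto)
  have "(\<integral>\<omega>. \<bar>Sn \<omega> n\<bar> \<partial>M) \<le> (\<integral>\<omega>. \<bar>W (ft t) \<omega> n\<bar> + \<bar>real n * mt t\<bar> + (\<Sum>i\<in>{0<..n}. \<bar>tl t (Xa i \<omega>)\<bar>) \<partial>M)"
  proof (rule integral_mono)
    show "integrable M (\<lambda>\<omega>. \<bar>Sn \<omega> n\<bar>)"
    proof -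
      have "integrable M (\<lambda>\<omega>. Sn \<omega> n)" unfolding Sn_def
        by (rule Bochner_Integration.integrable_sum) (auto intro!: h_Xa_int h_int)
      then show ?thesis by simp
    qed
    show "integrable M (\<lambda>\<omega>. \<bar>W (ft t) \<omega> n\<bar> + \<bar>real n * mt t\<bar> + (\<Sum>i\<in>{0<..n}. \<bar>tl t (Xa i \<omega>)\<bar>))"
      using W_i T_i by simp
    fix \<omega>
    have "\<bar>Sn \<omega> n\<bar> = \<bar>W (ft t) \<omega> n + real n * mt t + (\<Sum>i\<in>{0<..n}. tl t (Xa i \<omega>))\<bar>"
      by (simp add: Sn_decomp[of \<omega> n t])
    also have "\<dots> \<le> \<bar>W (ft t) \<omega> n\<bar> + \<bar>real n * mt t\<bar> + \<bar>\<Sum>i\<in>{0<..n}. tl t (Xa i \<omega>)\<bar>" by linarith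
    also have "\<bar>\<Sum>i\<in>{0<..n}. tl t (Xa i \<omega>)\<bar> \<le> (\<Sum>i\<in>{0<..n}. \<bar>tl t (Xa i \<omega>)\<bar>)" by (rule sum_abs)
    finally show "\<bar>Sn \<omega> n\<bar> \<le> \<bar>W (ft t) \<omega> n\<bar> + \<bar>real n * mt t\<bar> + (\<Sum>i\<in>{0<..n}. \<bar>tl t (Xa i \<omega>)\<bar>)"
      by simp
  qed
  also have "\<dots> = (\<integral>\<omega>. \<bar>W (ft t) \<omega> n\<bar> \<partial>M) + \<bar>real n * mt t\<bar> + (\<Sum>i\<in>{0<..n}. \<integral>\<omega>. \<bar>tl t (Xa i \<omega>)\<bar> \<partial>M)"
    using W_i T_i tl_i by (simp add: prob_space Bochner_Integration.integral_sum)
  also have "\<dots> \<le> real n powr (1/p) * sqrt (Kp * (1 + ln (real n))) + real n powr (1/p) * Kp + real n powr (1/p) * Kp"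
  proof (intro add_mono)
    have "(\<integral>\<omega>. \<bar>W (ft t) \<omega> n\<bar> \<partial>M) \<le> sqrt (\<integral>\<omega>. (W (ft t) \<omega> n)^2 \<partial>M)"
      by (rule L1_le_L2[OF W_m W_b])
    also have "(\<integral>\<omega>. (W (ft t) \<omega> n)^2 \<partial>M) = (\<integral>\<omega>. (W (ft t) \<omega> n - W (ft t) \<omega> 0)^2 \<partial>M)" by simp
    also have "\<dots> = (\<integral>x. (ft t x)^2 \<partial>mu) * ccab 0 n"
      by (rule Wdiff_exp[OF ft_meas _ ft0]) (use ft_bound less_imp_le[OF t0] in auto)
    also have "\<dots> \<le> (Kp * t powr (2 - p)) * (real n * (1 + ln (real n)))"
    proof (rule mult_mono)
      show "(\<integral>x. (ft t x)^2 \<partial>mu) \<le> Kp * t powr (2 - p)" by (rule ft2[OF t0])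
      have "ccab 0 n \<le> real n * harm n" by (rule ccab_bound[OF al n])
      also have "\<dots> \<le> real n * (1 + ln (real n))" using harm_le_ln[OF n] by (intro mult_left_mono) auto
      finally show "ccab 0 n \<le> real n * (1 + ln (real n))" .
    qed (auto simp: Kp_nonneg ccab_nonneg)
    also have "\<dots> = (real n powr (1/p))^2 * (Kp * (1 + ln (real n)))"
    proof -
      have "t powr (2 - p) * real n = real n powr ((2 - p) / p + 1)"
        unfolding t_def using n by (simp add: powr_powr powr_add)
      also have "(2 - p) / p + 1 = 2 * (1/p)" using p1 by (simp add: field_simps)
      also have "real n powr (2 * (1/p)) = (real n powr (1/p))^2"
        by (simp add: powr_powr[symmetric] powr_numeral[symmetric] powr_mult_base power2_eq_square powr_add[symmetric])
      finally have "t powr (2 - p) * real n = (real n powr (1/p))^2" .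
      then show ?thesis by (simp add: algebra_simps)
    qed
    finally show "(\<integral>\<omega>. \<bar>W (ft t) \<omega> n\<bar> \<partial>M) \<le> real n powr (1/p) * sqrt (Kp * (1 + ln (real n)))"
      by (simp add: real_sqrt_mult)
    have ntp: "real n * t powr (1 - p) = real n powr (1/p)"
    proof -
      have "real n * t powr (1 - p) = real n powr ((1 - p) / p + 1)"
        unfolding t_def using n by (simp add: powr_powr powr_add)
      also have "(1 - p) / p + 1 = 1/p" using p1 by (simp add: field_simps)
      finally show ?thesis .
    qed
    have "\<bar>real n * mt t\<bar> \<le> real n * (Kp * t powr (1 - p))"
      by (simp add: abs_mult mult_left_mono mt_bound[OF t0])
    also have "real n * (Kp * t powr (1 - p)) = Kp * (real n * t powr (1 - p))" by simp
    finally show "\<bar>real n * mt t\<bar> \<le> real n powr (1/p) * Kp" using ntp by (simp add: mult.commute)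
    have "(\<Sum>i\<in>{0<..n}. \<integral>\<omega>. \<bar>tl t (Xa i \<omega>)\<bar> \<partial>M) = (\<Sum>i\<in>{0<..n}. \<integral>x. \<bar>tl t x\<bar> \<partial>mu)"
      by (intro sum.cong refl h_Xa_distr) auto
    also have "\<dots> \<le> (\<Sum>i\<in>{0<..n}. Kp * t powr (1 - p))" by (intro sum_mono tl_abs_int[OF t0])
    also have "\<dots> = real n powr (1/p) * Kp" using ntp by (simp add: algebra_simps)
    finally show "(\<Sum>i\<in>{0<..n}. \<integral>\<omega>. \<bar>tl t (Xa i \<omega>)\<bar> \<partial>M) \<le> real n powr (1/p) * Kp" .
  qed
  finally show ?thesis by (simp add: algebra_simps)
qed

end


lemma powr_diff_bound:
  fixes a c p :: real assumes p: "0 \<le> p"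
  shows "\<bar>a - c\<bar> powr p \<le> 2 powr p * (\<bar>a\<bar> powr p + \<bar>c\<bar> powr p)"
proof -
  define m where "m = max \<bar>a\<bar> \<bar>c\<bar>"
  have "\<bar>a - c\<bar> \<le> 2 * m" unfolding m_def by linarith
  then have "\<bar>a - c\<bar> powr p \<le> (2 * m) powr p" using p by (intro powr_mono2) auto
  also have "\<dots> = 2 powr p * m powr p" unfolding m_def by (simp add: powr_mult)
  also have "m powr p \<le> \<bar>a\<bar> powr p + \<bar>c\<bar> powr p" unfolding m_def by (auto simp: max_def)
  finally show ?thesis by (simp add: mult_left_mono)
qed

lemma abs_le_powr: "1 \<le> p \<Longrightarrow> \<bar>x::real\<bar> \<le> 1 + \<bar>x\<bar> powr p"
proof (cases "\<bar>x\<bar> \<le> 1")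
  case False
  assume p: "1 \<le> p"
  have "\<bar>x\<bar> = \<bar>x\<bar> powr 1" using False by simp
  also have "\<dots> \<le> \<bar>x\<bar> powr p" using False p by (intro powr_mono) auto
  finally show ?thesis by simp
qed (use powr_ge_zero[of "\<bar>x\<bar>" p] in linarith)

lemma powr_mult_div: "0 < (x::real) \<Longrightarrow> x powr a * x powr b / x = x powr (a + b - 1)"
proof -
  assume x: "0 < x"
  have "x powr (a + b - 1) = x powr (a + b) / x powr 1" by (rule powr_diff)
  then show ?thesis using x by (simp add: powr_add)
qed

lemma powr_tendsto_0: "s < 0 \<Longrightarrow> (\<lambda>n::nat. real n powr s) \<longlonglongrightarrow> 0"
  by (rule tendsto_neg_powr) (auto intro: filterlim_real_sequentially)

context srrw_ctx begin

lemma Delta_meas: "g \<in> borel_measurable borel \<Longrightarrow> (\<lambda>\<omega>. Delta mu Xa g n \<omega>) \<in> borel_measurable M"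
  unfolding Delta_def by (intro borel_measurable_diff borel_measurable_divide borel_measurable_sum
      measurable_compose[OF Xa_meas]) auto

lemma Delta_AE: "AE \<omega> in M. \<forall>n g. Delta mu X g n \<omega> = Delta mu Xa g n \<omega>"
  using X_eq_Xa
proof eventually_elim
  case (elim \<omega>)
  show ?case
  proof (intro allI)
    fix n and g :: "real^'d \<Rightarrow> real"
    have "(\<Sum>i = 1..n. g (X i \<omega>)) = (\<Sum>i = 1..n. g (Xa i \<omega>))"
      by (rule sum.cong) (use elim in auto)
    then show "Delta mu X g n \<omega> = Delta mu Xa g n \<omega>" by (simp add: Delta_def)
  qed
qed

lemma generic:
  fixes g :: "real^'d \<Rightarrow> real" and p \<nu> :: real
  assumes al: "alpha \<le> 1/2" and g: "g \<in> borel_measurable borel"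
    and gp: "integrable mu (\<lambda>x. \<bar>g x\<bar> powr p)" and p: "1 < p" "p \<le> 2"
    and \<nu>: "0 < \<nu>" "\<nu> < 1 - 1/p"
  shows "AE \<omega> in M. (\<lambda>n. real n powr \<nu> * Delta mu Xa g n \<omega>) \<longlonglongrightarrow> 0"
    and "(\<lambda>n. \<integral>\<^sup>+\<omega>. ennreal (real n powr \<nu> * \<bar>Delta mu Xa g n \<omega>\<bar>) \<partial>M) \<longlonglongrightarrow> 0"
proof -
  interpret mu: prob_space mu by (rule mu_prob)
  have mm: "measurable mu = measurable borel"
    by (intro ext measurable_cong_sets) (simp_all add: sets_mu)
  have gmu: "g \<in> borel_measurable mu" using g by (simp add: mm)
  have g_int: "integrable mu g"
  proof (rule Bochner_Integration.integrable_bound[where f="\<lambda>x. 1 + \<bar>g x\<bar> powr p"])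
    show "integrable mu (\<lambda>x. 1 + \<bar>g x\<bar> powr p)" using gp by simp
    show "AE x in mu. norm (g x) \<le> norm (1 + \<bar>g x\<bar> powr p)"
      using abs_le_powr[of p] p by auto
  qed (rule gmu)
  define c where "c = (\<integral>x. g x \<partial>mu)"
  define h where "h x = g x - c" for x
  have hm: "h \<in> borel_measurable borel" unfolding h_def using g by simp
  have hmu: "h \<in> borel_measurable mu" unfolding h_def using gmu by simp
  have h_int: "integrable mu h" unfolding h_def using g_int by simp
  have h0: "(\<integral>x. h x \<partial>mu) = 0" unfolding h_def c_def using g_int by (simp add: mu.prob_space)
  have hp: "integrable mu (\<lambda>x. \<bar>h x\<bar> powr p)"
  proof (rule Bochner_Integration.integrable_bound[where f="\<lambda>x. 2 powr p * (\<bar>g x\<bar> powr p + \<bar>c\<bar> powr p)"])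
    show "integrable mu (\<lambda>x. 2 powr p * (\<bar>g x\<bar> powr p + \<bar>c\<bar> powr p))" using gp by simp
    show "AE x in mu. norm (\<bar>h x\<bar> powr p) \<le> norm (2 powr p * (\<bar>g x\<bar> powr p + \<bar>c\<bar> powr p))"
      using powr_diff_bound[of p] p unfolding h_def by auto
  qed (use hmu in simp)
  interpret F: srrw_fun M mu alpha Y X xi U h p
    by unfold_locales (use hm h_int h0 hp p in auto)
  have Dl: "Delta mu Xa g n \<omega> = F.Sn \<omega> n / real n" if n: "1 \<le> n" for n \<omega>
  proof -
    have "{1..n} = {0<..n}" by auto
    then have "(\<Sum>i = 1..n. g (Xa i \<omega>)) = F.Sn \<omega> n + real n * c"
      unfolding F.Sn_def h_def by (simp add: sum.distrib sum_subtractf)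
    then show ?thesis unfolding Delta_def c_def[symmetric] using n by (simp add: field_simps)
  qed
  define v where "v = (\<nu> + (1 - 1/p)) / 2"
  have v: "0 < v" "v < 1 - 1/p" "\<nu> < v" using \<nu> by (auto simp: v_def)
  have e1: "\<nu> - v < 0" and e2: "\<nu> + 1/p - 1 < 0" using v \<nu> by auto
  show "AE \<omega> in M. (\<lambda>n. real n powr \<nu> * Delta mu Xa g n \<omega>) \<longlonglongrightarrow> 0"
    using F.Sn_AE[OF al v(1,2)]
  proof eventually_elim
    case (elim \<omega>)
    let ?b = "\<lambda>n::nat. real n powr (\<nu> - v) + F.Kp * real n powr (\<nu> + 1/p - 1)"
    have lim: "?b \<longlonglongrightarrow> 0"
      using tendsto_add[OF powr_tendsto_0[OF e1] tendsto_mult_right_zero[OF powr_tendsto_0[OF e2], of F.Kp]] by simp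
    show ?case
    proof (rule Lim_null_comparison[OF _ lim])
      show "eventually (\<lambda>n. norm (real n powr \<nu> * Delta mu Xa g n \<omega>) \<le> ?b n) sequentially"
        using eventually_conj[OF elim eventually_ge_at_top[of 1]]
      proof eventually_elim
        case (elim n)
        then have n: "1 \<le> n" and Sb: "\<bar>F.Sn \<omega> n\<bar> \<le> real n powr (1 - v) + F.Kp * real n powr (1/p)" by auto
        have npos: "0 < real n" using n by simp
        have "norm (real n powr \<nu> * Delta mu Xa g n \<omega>) = real n powr \<nu> * \<bar>F.Sn \<omega> n\<bar> / real n"
          using Dl[OF n] npos by (simp add: abs_mult)
        also have "\<dots> \<le> real n powr \<nu> * (real n powr (1 - v) + F.Kp * real n powr (1/p)) / real n"
          using Sb npos by (intro divide_right_mono mult_left_mono) auto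
        also have "\<dots> = ?b n"
        proof -
          have a: "real n powr \<nu> * real n powr (1 - v) / real n = real n powr (\<nu> - v)"
            using powr_mult_div[OF npos, of \<nu> "1 - v"] by simp
          have b: "real n powr \<nu> * real n powr (1/p) / real n = real n powr (\<nu> + 1/p - 1)"
            using powr_mult_div[OF npos, of \<nu> "1/p"] by simp
          have "real n powr \<nu> * (real n powr (1 - v) + F.Kp * real n powr (1/p)) / real n
              = real n powr \<nu> * real n powr (1 - v) / real n + F.Kp * (real n powr \<nu> * real n powr (1/p) / real n)"
            by (simp add: algebra_simps add_divide_distrib)
          then show ?thesis using a b by simp
        qed
        finally show ?case .
      qed
    qed
  qed
  let ?e = "1 - 1/p - \<nu>"
  have epos: "0 < ?e" using \<nu> by simp
  let ?b = "\<lambda>n::nat. real n powr (- ?e) * (sqrt (F.Kp * (1 + ln (real n))) + 2 * F.Kp)"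
  have lim: "?b \<longlonglongrightarrow> 0"
  proof -
    have l1: "(\<lambda>n::nat. real n powr (- ?e) * sqrt (1 + ln (real n))) \<longlonglongrightarrow> 0"
      using epos by real_asymp
    have "(\<lambda>n::nat. sqrt F.Kp * (real n powr (- ?e) * sqrt (1 + ln (real n))) + 2 * F.Kp * real n powr (- ?e)) \<longlonglongrightarrow> 0"
      using tendsto_add[OF tendsto_mult_right_zero[OF l1] tendsto_mult_right_zero[OF powr_tendsto_0[of "- ?e"]]] epos
      by simp
    moreover have "eventually (\<lambda>n. sqrt F.Kp * (real n powr (- ?e) * sqrt (1 + ln (real n))) + 2 * F.Kp * real n powr (- ?e) = ?b n) sequentially"
    proof (rule always_eventually, intro allI)
      fix n :: nat
      have sq: "sqrt (F.Kp * (1 + ln (real n))) = sqrt F.Kp * sqrt (1 + ln (real n))" by (rule real_sqrt_mult)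
      show "sqrt F.Kp * (real n powr (- ?e) * sqrt (1 + ln (real n))) + 2 * F.Kp * real n powr (- ?e) = ?b n"
        by (simp only: sq) (simp add: algebra_simps)
    qed
    ultimately show ?thesis by (rule Lim_transform_eventually)
  qed
  show "(\<lambda>n. \<integral>\<^sup>+\<omega>. ennreal (real n powr \<nu> * \<bar>Delta mu Xa g n \<omega>\<bar>) \<partial>M) \<longlonglongrightarrow> 0"
  proof (rule tendsto_sandwich[OF _ _ tendsto_const])
    show "eventually (\<lambda>n. 0 \<le> \<integral>\<^sup>+\<omega>. ennreal (real n powr \<nu> * \<bar>Delta mu Xa g n \<omega>\<bar>) \<partial>M) sequentially" by simp
    show "((\<lambda>n. ennreal (?b n)) \<longlongrightarrow> 0) sequentially"
      using tendsto_ennrealI[OF lim] by simp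
    show "eventually (\<lambda>n. (\<integral>\<^sup>+\<omega>. ennreal (real n powr \<nu> * \<bar>Delta mu Xa g n \<omega>\<bar>) \<partial>M) \<le> ennreal (?b n)) sequentially"
      using eventually_ge_at_top[of "1::nat"]
    proof eventually_elim
      case (elim n)
      have npos: "0 < real n" using elim by simp
      have Si: "integrable M (\<lambda>\<omega>. F.Sn \<omega> n)" unfolding F.Sn_def
        by (rule Bochner_Integration.integrable_sum) (auto intro!: F.h_Xa_int hm h_int)
      have "(\<integral>\<^sup>+\<omega>. ennreal (real n powr \<nu> * \<bar>Delta mu Xa g n \<omega>\<bar>) \<partial>M)
          = (\<integral>\<^sup>+\<omega>. ennreal (real n powr \<nu> / real n * \<bar>F.Sn \<omega> n\<bar>) \<partial>M)"
        using Dl[OF elim] npos by (intro nn_integral_cong) (simp add: abs_mult)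
      also have "\<dots> = ennreal (\<integral>\<omega>. real n powr \<nu> / real n * \<bar>F.Sn \<omega> n\<bar> \<partial>M)"
        using Si by (intro nn_integral_eq_integral) auto
      also have "\<dots> \<le> ennreal (?b n)"
      proof (rule ennreal_leI)
        have "(\<integral>\<omega>. real n powr \<nu> / real n * \<bar>F.Sn \<omega> n\<bar> \<partial>M) = real n powr \<nu> / real n * (\<integral>\<omega>. \<bar>F.Sn \<omega> n\<bar> \<partial>M)"
          by simp
        also have "\<dots> \<le> real n powr \<nu> / real n * (real n powr (1/p) * (sqrt (F.Kp * (1 + ln (real n))) + 2 * F.Kp))"
          using F.Sn_L1[OF al elim] by (intro mult_left_mono) auto
        also have "\<dots> = ?b n"
        proof -
          have "real n powr \<nu> / real n * real n powr (1/p) = real n powr (\<nu> + 1/p - 1)"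
            using powr_mult_div[OF npos, of \<nu> "1/p"] by simp
          also have "\<nu> + 1/p - 1 = - ?e" by simp
          finally have "real n powr \<nu> / real n * real n powr (1/p) = real n powr (- ?e)" .
          then show ?thesis by (simp add: mult.assoc[symmetric])
        qed
        finally show "(\<integral>\<omega>. real n powr \<nu> / real n * \<bar>F.Sn \<omega> n\<bar> \<partial>M) \<le> ?b n" .
      qed
      finally show ?case .
    qed
  qed
qed

end


lemma powr_le_1_plus:
  fixes y a b :: real assumes "0 \<le> a" "a \<le> b" "0 \<le> y"
  shows "y powr a \<le> 1 + y powr b"
proof (cases "y \<le> 1")
  case True
  have "y powr a \<le> 1"
  proof (cases "y = 0")
    case False
    have "y powr a \<le> 1 powr a" using True assms by (intro powr_mono2) auto
    then show ?thesis by simp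
  qed simp
  then show ?thesis by (simp add: add_increasing2)
next
  case False
  then have "y powr a \<le> y powr b" using assms by (intro powr_mono) auto
  then show ?thesis by simp
qed

lemma sum_sq_bound:
  fixes f :: "'i::finite \<Rightarrow> 'i \<Rightarrow> real"
  shows "sqrt (\<Sum>i\<in>UNIV. \<Sum>j\<in>UNIV. (f i j)^2) \<le> (\<Sum>ij\<in>UNIV. \<bar>f (fst ij) (snd ij)\<bar>)"
proof -
  have "(\<Sum>i\<in>UNIV. \<Sum>j\<in>UNIV. (f i j)^2) = (\<Sum>ij\<in>UNIV. (f (fst ij) (snd ij))^2)"
    by (simp add: sum.cartesian_product case_prod_beta UNIV_Times_UNIV[symmetric] del: UNIV_Times_UNIV)
  then have "sqrt (\<Sum>i\<in>UNIV. \<Sum>j\<in>UNIV. (f i j)^2) = L2_set (\<lambda>ij. f (fst ij) (snd ij)) UNIV"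
    by (simp add: L2_set_def)
  also have "\<dots> \<le> (\<Sum>ij\<in>UNIV. \<bar>f (fst ij) (snd ij)\<bar>)" by (rule L2_set_le_sum_abs)
  finally show ?thesis .
qed

lemma meas_g1: "(\<lambda>x::real^'d. norm x powr 2) \<in> borel_measurable borel" by measurable
lemma meas_g2: "(\<lambda>x::real^'d. norm x powr c) \<in> borel_measurable borel" by measurable
lemma meas_gij: "(\<lambda>x::real^'d. x $ i * x $ j) \<in> borel_measurable borel"
  by (intro borel_measurable_continuous_onI continuous_intros)


theorem corollary3p5:
  fixes M :: "'a measure" and \<mu> :: "(real ^ 'd) measure" and \<alpha> \<delta> :: real
    and Y X :: "nat \<Rightarrow> 'a \<Rightarrow> real ^ 'd" and \<xi> :: "nat \<Rightarrow> 'a \<Rightarrow> bool" and U :: "nat \<Rightarrow> 'a \<Rightarrow> nat"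
  assumes S: "srrw M \<mu> \<alpha> Y \<xi> U X"
    and \<alpha>: "0 \<le> \<alpha>" "\<alpha> \<le> 1/2"
    and nondeg: "\<mu> \<noteq> return borel 0"
    and \<delta>: "\<delta> > 0"
    and mom: "integrable \<mu> (\<lambda>x. norm x powr (2 + \<delta>))"
    and mean0: "(\<integral>x. x \<partial>\<mu>) = 0"
  shows "\<forall>\<nu>. 0 < \<nu> \<and> \<nu> < \<delta> / (4 + 2 * \<delta>) \<longrightarrow>
     (let D = (\<lambda>n \<omega>. real n powr \<nu> *
                 Max {\<bar>Delta \<mu> X (\<lambda>x. norm x powr 2) n \<omega>\<bar>,
                      \<bar>Delta \<mu> X (\<lambda>x. norm x powr (2 + \<delta> / 2)) n \<omega>\<bar>,
                      Delta_cov_frob \<mu> X n \<omega>})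
      in (AE \<omega> in M. (\<lambda>n. D n \<omega>) \<longlonglongrightarrow> 0) \<and>
         (\<lambda>n. \<integral>\<^sup>+ \<omega>. ennreal (D n \<omega>) \<partial>M) \<longlonglongrightarrow> 0)"
proof (intro allI impI)
  fix \<nu> :: real assume \<nu>: "0 < \<nu> \<and> \<nu> < \<delta> / (4 + 2 * \<delta>)"
  interpret srrw_ctx M \<mu> \<alpha> Y X \<xi> U by unfold_locales (rule S)
  interpret mu: prob_space \<mu> by (rule mu_prob)
  define p where "p = (4 + 2 * \<delta>) / (4 + \<delta>)"
  have p1: "1 < p" and p2: "p \<le> 2" using \<delta> by (simp_all add: p_def field_simps)
  have p\<nu>: "\<nu> < 1 - 1/p" using \<nu> \<delta> by (simp add: p_def field_simps)
  have al: "\<alpha> \<le> 1/2" using \<alpha> by simp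
  have mm: "measurable \<mu> = measurable borel"
    by (intro ext measurable_cong_sets) (simp_all add: sets_mu)
  define g1 where "g1 = (\<lambda>x::real^'d. norm x powr 2)"
  define g2 where "g2 = (\<lambda>x::real^'d. norm x powr (2 + \<delta> / 2))"
  define gg where "gg = (\<lambda>ij::'d \<times> 'd. \<lambda>x::real^'d. x $ fst ij * x $ snd ij)"
  have mom1: "integrable \<mu> (\<lambda>x. 1 + norm x powr (2 + \<delta>))" using mom by simp
  have g1m: "g1 \<in> borel_measurable borel" unfolding g1_def by (rule meas_g1)
  have g2m: "g2 \<in> borel_measurable borel" unfolding g2_def by (rule meas_g2)
  have ggm: "gg ij \<in> borel_measurable borel" for ij unfolding gg_def by (rule meas_gij)
  have two_p: "2 * p \<le> 2 + \<delta>" using \<delta> by (simp add: p_def field_simps)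
  have sq_bound: "\<bar>g x\<bar> powr p \<le> 1 + norm x powr (2 + \<delta>)" if "\<bar>g x\<bar> \<le> norm x powr 2" for g :: "real^'d \<Rightarrow> real" and x
  proof -
    have "\<bar>g x\<bar> powr p \<le> (norm x powr 2) powr p" using that p1 by (intro powr_mono2) auto
    also have "\<dots> = norm x powr (2 * p)" by (simp only: powr_powr)
    also have "\<dots> \<le> 1 + norm x powr (2 + \<delta>)" using two_p p1 by (intro powr_le_1_plus) auto
    finally show ?thesis .
  qed
  have int_from: "integrable \<mu> (\<lambda>x. \<bar>g x\<bar> powr p)"
    if gm: "g \<in> borel_measurable borel" and gb: "\<And>x. \<bar>g x\<bar> powr p \<le> 1 + norm x powr (2 + \<delta>)" for g :: "real^'d \<Rightarrow> real"
  proof (rule Bochner_Integration.integrable_bound[OF mom1])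
    show "(\<lambda>x. \<bar>g x\<bar> powr p) \<in> borel_measurable \<mu>" using gm by (simp add: mm)
    show "AE x in \<mu>. norm (\<bar>g x\<bar> powr p) \<le> norm (1 + norm x powr (2 + \<delta>))" using gb by simp
  qed
  have i1: "integrable \<mu> (\<lambda>x. \<bar>g1 x\<bar> powr p)"
    by (rule int_from[OF g1m], rule sq_bound) (simp add: g1_def)
  have i2: "integrable \<mu> (\<lambda>x. \<bar>g2 x\<bar> powr p)"
  proof (rule int_from[OF g2m])
    fix x :: "real^'d"
    have "(2 + \<delta> / 2) * p = 2 + \<delta>" using \<delta> by (simp add: p_def field_simps)
    then have "\<bar>g2 x\<bar> powr p = norm x powr (2 + \<delta>)" by (simp add: g2_def powr_powr)
    then show "\<bar>g2 x\<bar> powr p \<le> 1 + norm x powr (2 + \<delta>)" by simp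
  qed
  have iij: "integrable \<mu> (\<lambda>x. \<bar>gg ij x\<bar> powr p)" for ij
  proof (rule int_from[OF ggm], rule sq_bound)
    fix x :: "real^'d"
    have "\<bar>gg ij x\<bar> \<le> norm x * norm x" unfolding gg_def abs_mult
      by (intro mult_mono component_le_norm_cart) auto
    then show "\<bar>gg ij x\<bar> \<le> norm x powr 2" by (simp add: powr_numeral power2_eq_square)
  qed
  note G1 = generic[OF al g1m i1 p1 p2 conjunct1[OF \<nu>] p\<nu>]
  note G2 = generic[OF al g2m i2 p1 p2 conjunct1[OF \<nu>] p\<nu>]
  note Gij = generic[OF al ggm iij p1 p2 conjunct1[OF \<nu>] p\<nu>]
  define A where "A = (\<lambda>g n \<omega>. real n powr \<nu> * \<bar>Delta \<mu> Xa g n \<omega>\<bar>)"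
  define B where "B = (\<lambda>n \<omega>. A g1 n \<omega> + A g2 n \<omega> + (\<Sum>ij\<in>UNIV. A (gg ij) n \<omega>))"
  define Dp where "Dp = (\<lambda>n \<omega>. real n powr \<nu> * Max {\<bar>Delta \<mu> Xa g1 n \<omega>\<bar>, \<bar>Delta \<mu> Xa g2 n \<omega>\<bar>, Delta_cov_frob \<mu> Xa n \<omega>})"
  have A_nn: "0 \<le> A g n \<omega>" for g n \<omega> by (simp add: A_def)
  have DpB: "0 \<le> Dp n \<omega> \<and> Dp n \<omega> \<le> B n \<omega>" for n \<omega>
  proof -
    have fr: "Delta_cov_frob \<mu> Xa n \<omega> \<le> (\<Sum>ij\<in>UNIV. \<bar>Delta \<mu> Xa (gg ij) n \<omega>\<bar>)"
      unfolding Delta_cov_frob_def gg_def by (rule sum_sq_bound)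
    have fr0: "0 \<le> Delta_cov_frob \<mu> Xa n \<omega>" unfolding Delta_cov_frob_def
      by (intro real_sqrt_ge_zero sum_nonneg) auto
    have M: "Max {\<bar>Delta \<mu> Xa g1 n \<omega>\<bar>, \<bar>Delta \<mu> Xa g2 n \<omega>\<bar>, Delta_cov_frob \<mu> Xa n \<omega>}
      = max \<bar>Delta \<mu> Xa g1 n \<omega>\<bar> (max \<bar>Delta \<mu> Xa g2 n \<omega>\<bar> (Delta_cov_frob \<mu> Xa n \<omega>))" by simp
    have s0: "0 \<le> (\<Sum>ij\<in>UNIV. \<bar>Delta \<mu> Xa (gg ij) n \<omega>\<bar>)" by (intro sum_nonneg) auto
    have "Max {\<bar>Delta \<mu> Xa g1 n \<omega>\<bar>, \<bar>Delta \<mu> Xa g2 n \<omega>\<bar>, Delta_cov_frob \<mu> Xa n \<omega>}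
       \<le> \<bar>Delta \<mu> Xa g1 n \<omega>\<bar> + \<bar>Delta \<mu> Xa g2 n \<omega>\<bar> + (\<Sum>ij\<in>UNIV. \<bar>Delta \<mu> Xa (gg ij) n \<omega>\<bar>)"
      unfolding M using fr fr0 s0 by linarith
    then have le: "real n powr \<nu> * Max {\<bar>Delta \<mu> Xa g1 n \<omega>\<bar>, \<bar>Delta \<mu> Xa g2 n \<omega>\<bar>, Delta_cov_frob \<mu> Xa n \<omega>}
       \<le> real n powr \<nu> * (\<bar>Delta \<mu> Xa g1 n \<omega>\<bar> + \<bar>Delta \<mu> Xa g2 n \<omega>\<bar> + (\<Sum>ij\<in>UNIV. \<bar>Delta \<mu> Xa (gg ij) n \<omega>\<bar>))"
      by (rule mult_left_mono) simp
    have ge: "0 \<le> Max {\<bar>Delta \<mu> Xa g1 n \<omega>\<bar>, \<bar>Delta \<mu> Xa g2 n \<omega>\<bar>, Delta_cov_frob \<mu> Xa n \<omega>}"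
      unfolding M by simp
    have Dp_eq: "Dp n \<omega> = real n powr \<nu> * Max {\<bar>Delta \<mu> Xa g1 n \<omega>\<bar>, \<bar>Delta \<mu> Xa g2 n \<omega>\<bar>, Delta_cov_frob \<mu> Xa n \<omega>}"
      unfolding Dp_def ..
    have B_eq: "B n \<omega> = real n powr \<nu> * (\<bar>Delta \<mu> Xa g1 n \<omega>\<bar> + \<bar>Delta \<mu> Xa g2 n \<omega>\<bar> + (\<Sum>ij\<in>UNIV. \<bar>Delta \<mu> Xa (gg ij) n \<omega>\<bar>))"
      unfolding B_def A_def by (simp only: distrib_left sum_distrib_left)
    show ?thesis unfolding Dp_eq B_eq using le ge by simp
  qed
  have DeqAE: "AE \<omega> in M. \<forall>n. real n powr \<nu> * Max {\<bar>Delta \<mu> X g1 n \<omega>\<bar>, \<bar>Delta \<mu> X g2 n \<omega>\<bar>, Delta_cov_frob \<mu> X n \<omega>} = Dp n \<omega>"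
    using Delta_AE
  proof eventually_elim
    case (elim \<omega>)
    then show ?case by (simp add: Dp_def Delta_cov_frob_def)
  qed
  have g1eq: "g1 = (\<lambda>x. norm x powr 2)" and g2eq: "g2 = (\<lambda>x. norm x powr (2 + \<delta> / 2))" by (simp_all add: g1_def g2_def)
  have AE_B: "AE \<omega> in M. (\<lambda>n. B n \<omega>) \<longlonglongrightarrow> 0"
  proof -
    have Aij: "AE \<omega> in M. \<forall>ij\<in>UNIV. (\<lambda>n. real n powr \<nu> * Delta \<mu> Xa (gg ij) n \<omega>) \<longlonglongrightarrow> 0"
      by (rule AE_finite_allI) (simp_all add: Gij(1))
    show ?thesis using G1(1) G2(1) Aij
    proof eventually_elim
      case (elim \<omega>)
      have t: "(\<lambda>n. A g n \<omega>) \<longlonglongrightarrow> 0" if "(\<lambda>n. real n powr \<nu> * Delta \<mu> Xa g n \<omega>) \<longlonglongrightarrow> 0" for g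
      proof -
        have "(\<lambda>n. \<bar>real n powr \<nu> * Delta \<mu> Xa g n \<omega>\<bar>) \<longlonglongrightarrow> 0" using tendsto_rabs_zero[OF that] .
        then show ?thesis by (simp add: A_def abs_mult)
      qed
      have "(\<lambda>n. A g1 n \<omega> + A g2 n \<omega> + (\<Sum>ij\<in>UNIV. A (gg ij) n \<omega>)) \<longlonglongrightarrow> 0 + 0 + (\<Sum>ij\<in>(UNIV::('d\<times>'d) set). 0)"
        using elim by (intro tendsto_add tendsto_sum t) auto
      then show ?case by (simp add: B_def)
    qed
  qed
  show "let D = (\<lambda>n \<omega>. real n powr \<nu> *
                 Max {\<bar>Delta \<mu> X (\<lambda>x. norm x powr 2) n \<omega>\<bar>,
                      \<bar>Delta \<mu> X (\<lambda>x. norm x powr (2 + \<delta> / 2)) n \<omega>\<bar>,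
                      Delta_cov_frob \<mu> X n \<omega>})
      in (AE \<omega> in M. (\<lambda>n. D n \<omega>) \<longlonglongrightarrow> 0) \<and>
         (\<lambda>n. \<integral>\<^sup>+ \<omega>. ennreal (D n \<omega>) \<partial>M) \<longlonglongrightarrow> 0"
    unfolding Let_def g1eq[symmetric] g2eq[symmetric]
  proof
    show "AE \<omega> in M. (\<lambda>n. real n powr \<nu> * Max {\<bar>Delta \<mu> X g1 n \<omega>\<bar>, \<bar>Delta \<mu> X g2 n \<omega>\<bar>, Delta_cov_frob \<mu> X n \<omega>}) \<longlonglongrightarrow> 0"
      using AE_B DeqAE
    proof eventually_elim
      case (elim \<omega>)
      have "(\<lambda>n. Dp n \<omega>) \<longlonglongrightarrow> 0"
      proof (rule Lim_null_comparison[OF _ elim(1)])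
        show "eventually (\<lambda>n. norm (Dp n \<omega>) \<le> B n \<omega>) sequentially"
          using DpB by (intro always_eventually) auto
      qed
      then show ?case using elim(2) by simp
    qed
    have Ameas: "(\<lambda>\<omega>. A g n \<omega>) \<in> borel_measurable M" if "g \<in> borel_measurable borel" for g n
      unfolding A_def using Delta_meas[OF that, of n] by measurable
    have intB: "(\<integral>\<^sup>+\<omega>. ennreal (B n \<omega>) \<partial>M) = (\<integral>\<^sup>+\<omega>. ennreal (A g1 n \<omega>) \<partial>M) + (\<integral>\<^sup>+\<omega>. ennreal (A g2 n \<omega>) \<partial>M)
        + (\<Sum>ij\<in>UNIV. \<integral>\<^sup>+\<omega>. ennreal (A (gg ij) n \<omega>) \<partial>M)" for n
    proof -
      have "(\<integral>\<^sup>+\<omega>. ennreal (B n \<omega>) \<partial>M) = (\<integral>\<^sup>+\<omega>. ennreal (A g1 n \<omega>) + ennreal (A g2 n \<omega>) + (\<Sum>ij\<in>UNIV. ennreal (A (gg ij) n \<omega>)) \<partial>M)"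
        by (intro nn_integral_cong) (simp add: B_def A_nn ennreal_plus sum_nonneg)
      also have "\<dots> = (\<integral>\<^sup>+\<omega>. ennreal (A g1 n \<omega>) + ennreal (A g2 n \<omega>) \<partial>M) + (\<integral>\<^sup>+\<omega>. (\<Sum>ij\<in>UNIV. ennreal (A (gg ij) n \<omega>)) \<partial>M)"
        using Ameas[OF g1m] Ameas[OF g2m] Ameas[OF ggm] by (intro nn_integral_add) auto
      also have "(\<integral>\<^sup>+\<omega>. ennreal (A g1 n \<omega>) + ennreal (A g2 n \<omega>) \<partial>M) = (\<integral>\<^sup>+\<omega>. ennreal (A g1 n \<omega>) \<partial>M) + (\<integral>\<^sup>+\<omega>. ennreal (A g2 n \<omega>) \<partial>M)"
        using Ameas[OF g1m] Ameas[OF g2m] by (intro nn_integral_add) auto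
      also have "(\<integral>\<^sup>+\<omega>. (\<Sum>ij\<in>UNIV. ennreal (A (gg ij) n \<omega>)) \<partial>M) = (\<Sum>ij\<in>UNIV. \<integral>\<^sup>+\<omega>. ennreal (A (gg ij) n \<omega>) \<partial>M)"
        using Ameas[OF ggm] by (intro nn_integral_sum) auto
      finally show ?thesis .
    qed
    show "(\<lambda>n. \<integral>\<^sup>+\<omega>. ennreal (real n powr \<nu> * Max {\<bar>Delta \<mu> X g1 n \<omega>\<bar>, \<bar>Delta \<mu> X g2 n \<omega>\<bar>, Delta_cov_frob \<mu> X n \<omega>}) \<partial>M) \<longlonglongrightarrow> 0"
    proof (rule tendsto_sandwich[OF _ _ tendsto_const])
      show "eventually (\<lambda>n. 0 \<le> \<integral>\<^sup>+\<omega>. ennreal (real n powr \<nu> * Max {\<bar>Delta \<mu> X g1 n \<omega>\<bar>, \<bar>Delta \<mu> X g2 n \<omega>\<bar>, Delta_cov_frob \<mu> X n \<omega>}) \<partial>M) sequentially"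
        by simp
      let ?u = "\<lambda>n. (\<integral>\<^sup>+\<omega>. ennreal (A g1 n \<omega>) \<partial>M) + (\<integral>\<^sup>+\<omega>. ennreal (A g2 n \<omega>) \<partial>M)
        + (\<Sum>ij\<in>UNIV. \<integral>\<^sup>+\<omega>. ennreal (A (gg ij) n \<omega>) \<partial>M)"
      show "eventually (\<lambda>n. (\<integral>\<^sup>+\<omega>. ennreal (real n powr \<nu> * Max {\<bar>Delta \<mu> X g1 n \<omega>\<bar>, \<bar>Delta \<mu> X g2 n \<omega>\<bar>, Delta_cov_frob \<mu> X n \<omega>}) \<partial>M) \<le> ?u n) sequentially"
      proof (intro always_eventually allI)
        fix n
        have "(\<integral>\<^sup>+\<omega>. ennreal (real n powr \<nu> * Max {\<bar>Delta \<mu> X g1 n \<omega>\<bar>, \<bar>Delta \<mu> X g2 n \<omega>\<bar>, Delta_cov_frob \<mu> X n \<omega>}) \<partial>M)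
            = (\<integral>\<^sup>+\<omega>. ennreal (Dp n \<omega>) \<partial>M)"
          by (rule nn_integral_cong_AE) (use DeqAE in auto)
        also have "\<dots> \<le> (\<integral>\<^sup>+\<omega>. ennreal (B n \<omega>) \<partial>M)"
          using DpB by (intro nn_integral_mono) (auto intro: ennreal_leI)
        also have "\<dots> = ?u n" by (rule intB)
        finally show "(\<integral>\<^sup>+\<omega>. ennreal (real n powr \<nu> * Max {\<bar>Delta \<mu> X g1 n \<omega>\<bar>, \<bar>Delta \<mu> X g2 n \<omega>\<bar>, Delta_cov_frob \<mu> X n \<omega>}) \<partial>M) \<le> ?u n" .
      qed
      have "?u \<longlonglongrightarrow> 0 + 0 + (\<Sum>ij\<in>(UNIV::('d\<times>'d) set). 0)"
        unfolding A_def by (intro tendsto_add tendsto_sum G1(2) G2(2) Gij(2))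
      then show "?u \<longlonglongrightarrow> 0" by simp
    qed
  qed
qed


end
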